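(* Consider the random triangle removal process on $n$ vertices. Set $\Phi(p,n)=p^{-2/\log n}\log n$, fix $\alpha>0$, and let \[\tau^*_{\mathrm{Y}}=\min\left\{t : \exists\, u,v \text{ such that } |Y_{u,v}-np^2|>\alpha n^{1/2}p\,\Phi\right\}.\] Then with high probability, for all $t$ with $t\le \tau^*_{\mathrm{Y}}$ and $p(t)\ge n^{-1/2}\log^2 n$, \[\left|Q-n^3p^3/6\right|\le \alpha^2 n^2 p\,\Phi^2.\]
   Context: Random triangle removal process: $G(0)=K_n$ on a vertex set $V_G$ with $|V_G|=n$; as long as $G(i)$ contains a triangle, $G(i+1)$ is obtained by deleting the three edges of a uniformly random triangle of $G(i)$. Write $t=t(i)=i/n^2$ and $p=p(i)=1-6i/n^2$; times $t$ range over values $i/n^2$, $i$ an integer. $Q=Q(i)$ is the number of triangles of $G(i)$, and for distinct vertices $u,v$, $Y_{u,v}=|N_u\cap N_v|$ is their co-degree in $G(i)$. "With high probability" means with probability tending to $1$ as $n\to\infty$. *)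

theory Defs
  imports "HOL-Probability.Probability"
begin

text \<open>Graphs on vertex set {..<n} are represented by their edge sets (sets of 2-element sets).\<close>

definition complete_graph :: "nat \<Rightarrow> nat set set" where
  "complete_graph n = {{a, b} | a b. a < n \<and> b < n \<and> a \<noteq> b}"

definition triangles :: "nat set set \<Rightarrow> nat set set" where
  "triangles G = {T. card T = 3 \<and> (\<forall>a\<in>T. \<forall>b\<in>T. a \<noteq> b \<longrightarrow> {a, b} \<in> G)}"

definition remove_triangle :: "nat set set \<Rightarrow> nat set \<Rightarrow> nat set set" where
  "remove_triangle G T = G - {{a, b} | a b. a \<in> T \<and> b \<in> T \<and> a \<noteq> b}"

definition removal_step :: "nat set set \<Rightarrow> nat set set pmf" where
  "removal_step G = map_pmf (remove_triangle G) (pmf_of_set (triangles G))"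

primrec traj :: "nat \<Rightarrow> nat \<Rightarrow> nat set set list pmf" where
  "traj n 0 = return_pmf [complete_graph n]"
| "traj n (Suc k) = bind_pmf (traj n k) (\<lambda>gs.
      if triangles (last gs) = {} then return_pmf gs
      else map_pmf (\<lambda>g. gs @ [g]) (removal_step (last gs)))"

text \<open>The full run of the process: n^2 exceeds the maximal number of steps (at most (n choose 2)/3),
  so the list is the complete trajectory G(0), ..., G(T) with G(T) triangle-free.\<close>
definition triangle_removal_process :: "nat \<Rightarrow> nat set set list pmf" where
  "triangle_removal_process n = traj n (n ^ 2)"

definition num_triangles :: "nat set set \<Rightarrow> nat" where
  "num_triangles G = card (triangles G)"

definition nbrs :: "nat set set \<Rightarrow> nat \<Rightarrow> nat set" where
  "nbrs G u = {w. {u, w} \<in> G}"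

definition codeg :: "nat set set \<Rightarrow> nat \<Rightarrow> nat \<Rightarrow> nat" where
  "codeg G u v = card (nbrs G u \<inter> nbrs G v)"

definition pp :: "nat \<Rightarrow> nat \<Rightarrow> real" where
  "pp n i = 1 - 6 * real i / (real n) ^ 2"

definition Phi :: "real \<Rightarrow> nat \<Rightarrow> real" where
  "Phi p n = p powr (- 2 / ln (real n)) * ln (real n)"

text \<open>The event of the theorem. "i \<le> tau*_Y" means: no co-degree violation at any time j < i.\<close>
definition good_event :: "nat \<Rightarrow> real \<Rightarrow> nat set set list \<Rightarrow> bool" where
  "good_event n \<alpha> gs \<longleftrightarrow>
     (\<forall>i < length gs.
        (pp n i \<ge> real n powr (-1/2) * (ln (real n)) ^ 2 \<and>
         (\<forall>j < i. \<forall>u < n. \<forall>v < n. u \<noteq> v \<longrightarrow>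
            \<bar>real (codeg (gs ! j) u v) - real n * (pp n j)^2\<bar>
              \<le> \<alpha> * sqrt (real n) * pp n j * Phi (pp n j) n))
        \<longrightarrow> \<bar>real (num_triangles (gs ! i)) - (real n)^3 * (pp n i)^3 / 6\<bar>
              \<le> \<alpha>^2 * (real n)^2 * pp n i * (Phi (pp n i) n)^2)"

end

theory Submission
  imports Defs "HOL-Real_Asymp.Real_Asymp"
begin


definition wfg :: "nat \<Rightarrow> nat set set \<Rightarrow> bool" where
  "wfg n G \<longleftrightarrow> G \<subseteq> complete_graph n"

definition edges3 :: "nat set \<Rightarrow> nat set set" where
  "edges3 T = {e. e \<subseteq> T \<and> card e = 2}"

definition Yc :: "nat set set \<Rightarrow> nat set \<Rightarrow> nat" where
  "Yc G e = card {S \<in> triangles G. e \<subseteq> S}"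

lemma complete_graph_alt: "complete_graph n = {e. e \<subseteq> {..<n} \<and> card e = 2}"
  unfolding complete_graph_def
  by (auto simp: card_2_iff)

lemma finite_complete_graph: "finite (complete_graph n)"
proof -
  have "complete_graph n \<subseteq> Pow {..<n}" by (auto simp: complete_graph_alt)
  then show ?thesis by (rule finite_subset) auto
qed

lemma wfg_finite: "wfg n G \<Longrightarrow> finite G"
  unfolding wfg_def using finite_complete_graph finite_subset by blast

lemma wfg_edge: "wfg n G \<Longrightarrow> e \<in> G \<Longrightarrow> e \<subseteq> {..<n} \<and> card e = 2"
  unfolding wfg_def complete_graph_alt by auto

lemma wfg_no_loop: "wfg n G \<Longrightarrow> {a} \<notin> G"
  using wfg_edge by fastforce

lemma triangles_sub: "wfg n G \<Longrightarrow> triangles G \<subseteq> {T. T \<subseteq> {..<n} \<and> card T = 3}"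
proof
  fix T assume w: "wfg n G" and T: "T \<in> triangles G"
  then have c: "card T = 3" and e: "\<forall>a\<in>T. \<forall>b\<in>T. a \<noteq> b \<longrightarrow> {a, b} \<in> G"
    by (auto simp: triangles_def)
  have "T \<subseteq> {..<n}"
  proof
    fix a assume a: "a \<in> T"
    from c obtain x y z where "T = {x,y,z}" "x \<noteq> y" "y \<noteq> z" "x \<noteq> z" by (auto simp: card_3_iff)
    then obtain b where "b \<in> T" "b \<noteq> a" using a by auto
    then have "{a,b} \<in> G" using e a by auto
    then show "a \<in> {..<n}" using wfg_edge[OF w] by auto
  qed
  then show "T \<in> {T. T \<subseteq> {..<n} \<and> card T = 3}" using c by auto
qed

lemma finite_triangles: "wfg n G \<Longrightarrow> finite (triangles G)"
  by (rule finite_subset[OF triangles_sub]) auto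

lemma remove_triangle_alt: "remove_triangle G T = G - edges3 T"
  unfolding remove_triangle_def edges3_def by (auto simp: card_2_iff)

lemma wfg_remove: "wfg n G \<Longrightarrow> wfg n (remove_triangle G T)"
  unfolding wfg_def remove_triangle_def by auto

lemma triangle_3: assumes "T \<in> triangles G"
  obtains a b c where "T = {a,b,c}" "a \<noteq> b" "b \<noteq> c" "a \<noteq> c"
    "{a,b} \<in> G" "{a,c} \<in> G" "{b,c} \<in> G"
proof -
  from assms have c: "card T = 3" and e: "\<forall>a\<in>T. \<forall>b\<in>T. a \<noteq> b \<longrightarrow> {a, b} \<in> G"
    by (auto simp: triangles_def)
  from c obtain x y z where "T = {x,y,z}" "x \<noteq> y" "y \<noteq> z" "x \<noteq> z" by (auto simp: card_3_iff)
  with e show ?thesis using that by auto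
qed

lemma edges3_abc: "a \<noteq> b \<Longrightarrow> b \<noteq> c \<Longrightarrow> a \<noteq> c \<Longrightarrow> edges3 {a,b,c} = {{a,b},{a,c},{b,c}}"
  unfolding edges3_def by (auto simp: card_2_iff doubleton_eq_iff)

lemma card_edges3: "T \<in> triangles G \<Longrightarrow> card (edges3 T) = 3"
  by (erule triangle_3) (auto simp: edges3_abc card_insert_if doubleton_eq_iff)

lemma edges3_sub: "T \<in> triangles G \<Longrightarrow> edges3 T \<subseteq> G"
  by (erule triangle_3) (auto simp: edges3_abc)

lemma card_remove: assumes "wfg n G" "T \<in> triangles G"
  shows "card (remove_triangle G T) = card G - 3"
proof -
  have f: "finite G" using wfg_finite[OF assms(1)] .
  have s: "edges3 T \<subseteq> G" using edges3_sub[OF assms(2)] .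
  have "finite (edges3 T)" using f s finite_subset by blast
  then show ?thesis using card_edges3[OF assms(2)] s
    by (simp add: remove_triangle_alt card_Diff_subset)
qed

lemma Yc_image: assumes w: "wfg n G" and uv: "{u,v} \<in> G" and ne: "u \<noteq> v"
  shows "{S \<in> triangles G. {u,v} \<subseteq> S} = (\<lambda>w. {u,v,w}) ` (nbrs G u \<inter> nbrs G v)"
proof (intro set_eqI iffI)
  fix S assume S: "S \<in> {S \<in> triangles G. {u,v} \<subseteq> S}"
  then have c: "card S = 3" and e: "\<forall>a\<in>S. \<forall>b\<in>S. a \<noteq> b \<longrightarrow> {a, b} \<in> G" and sub: "{u,v} \<subseteq> S"
    by (auto simp: triangles_def)
  have fS: "finite S"
  proof (rule ccontr)
    assume "infinite S" then have "card S = 0" by simp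
    with c show False by simp
  qed
  have "card {u,v} = 2" using ne by auto
  have "S - {u,v} \<noteq> {}"
  proof
    assume "S - {u,v} = {}" then have "S \<subseteq> {u,v}" by auto
    then have "card S \<le> card {u,v}" by (rule card_mono[rotated]) simp
    then show False using c ne by simp
  qed
  then obtain w where wS: "w \<in> S" and wn: "w \<notin> {u,v}" by auto
  have "{u,v,w} \<subseteq> S" using sub wS by auto
  moreover have "card {u,v,w} = 3" using ne wn by auto
  ultimately have "{u,v,w} = S" using c fS by (simp add: card_subset_eq)
  moreover have "w \<in> nbrs G u \<inter> nbrs G v" using e wS wn sub unfolding nbrs_def
    by (auto simp: insert_commute)
  ultimately show "S \<in> (\<lambda>w. {u,v,w}) ` (nbrs G u \<inter> nbrs G v)" by auto
next
  fix S assume "S \<in> (\<lambda>w. {u,v,w}) ` (nbrs G u \<inter> nbrs G v)"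
  then obtain w where S: "S = {u,v,w}" and wu: "{u,w} \<in> G" and wv: "{v,w} \<in> G"
    by (auto simp: nbrs_def)
  have "w \<noteq> u" using wu wfg_no_loop[OF w] by auto
  moreover have "w \<noteq> v" using wv wfg_no_loop[OF w] by auto
  ultimately have "card S = 3" using S ne by auto
  moreover have "\<forall>a\<in>S. \<forall>b\<in>S. a \<noteq> b \<longrightarrow> {a, b} \<in> G"
    using S uv wu wv by (auto simp: insert_commute)
  ultimately show "S \<in> {S \<in> triangles G. {u,v} \<subseteq> S}" using S by (auto simp: triangles_def)
qed

lemma Yc_codeg: assumes w: "wfg n G" and uv: "{u,v} \<in> G" and ne: "u \<noteq> v"
  shows "Yc G {u,v} = codeg G u v"
proof -
  have "inj_on (\<lambda>w. {u,v,w}) (nbrs G u \<inter> nbrs G v)"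
  proof (rule inj_onI)
    fix x y assume x: "x \<in> nbrs G u \<inter> nbrs G v" and y: "y \<in> nbrs G u \<inter> nbrs G v"
      and eq: "{u,v,x} = {u,v,y}"
    have "x \<notin> {u,v}" using x wfg_no_loop[OF w] by (auto simp: nbrs_def)
    moreover have "y \<notin> {u,v}" using y wfg_no_loop[OF w] by (auto simp: nbrs_def)
    ultimately show "x = y" using eq by auto
  qed
  then show ?thesis unfolding Yc_def codeg_def Yc_image[OF assms] by (simp add: card_image)
qed

lemma tri_remove: "triangles (remove_triangle G T) = {S \<in> triangles G. \<not> (\<exists>e\<in>edges3 T. e \<subseteq> S)}"
proof (intro set_eqI iffI)
  fix S assume S: "S \<in> triangles (remove_triangle G T)"
  then have c: "card S = 3" and e: "\<forall>a\<in>S. \<forall>b\<in>S. a \<noteq> b \<longrightarrow> {a, b} \<in> G - edges3 T"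
    by (auto simp: triangles_def remove_triangle_alt)
  have "\<not> (\<exists>e\<in>edges3 T. e \<subseteq> S)"
  proof
    assume "\<exists>e\<in>edges3 T. e \<subseteq> S"
    then obtain e where "e \<in> edges3 T" "e \<subseteq> S" by auto
    moreover then obtain a b where "e = {a,b}" "a \<noteq> b" by (auto simp: edges3_def card_2_iff)
    ultimately show False using e by auto
  qed
  then show "S \<in> {S \<in> triangles G. \<not> (\<exists>e\<in>edges3 T. e \<subseteq> S)}"
    using c e by (auto simp: triangles_def)
next
  fix S assume S: "S \<in> {S \<in> triangles G. \<not> (\<exists>e\<in>edges3 T. e \<subseteq> S)}"
  then have c: "card S = 3" and e: "\<forall>a\<in>S. \<forall>b\<in>S. a \<noteq> b \<longrightarrow> {a, b} \<in> G"
    and ne: "\<forall>e\<in>edges3 T. \<not> e \<subseteq> S" by (auto simp: triangles_def)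
  have "{a,b} \<notin> edges3 T" if "a \<in> S" "b \<in> S" "a \<noteq> b" for a b
    using ne that by auto
  then show "S \<in> triangles (remove_triangle G T)"
    using c e unfolding triangles_def remove_triangle_alt by blast
qed

lemma count_removed: assumes w: "wfg n G" and T: "T \<in> triangles G"
  shows "card {S \<in> triangles G. \<exists>e\<in>edges3 T. e \<subseteq> S} + 2 = (\<Sum>e\<in>edges3 T. Yc G e)"
proof -
  obtain a b c where abc: "T = {a,b,c}" "a \<noteq> b" "b \<noteq> c" "a \<noteq> c"
    "{a,b} \<in> G" "{a,c} \<in> G" "{b,c} \<in> G" using triangle_3[OF T] by blast
  define A where "A e = {S \<in> triangles G. e \<subseteq> S}" for e
  have fin: "finite (A e)" for e using finite_triangles[OF w] by (auto simp: A_def)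
  have TA: "T \<in> A e" if "e \<subseteq> T" for e using T that by (auto simp: A_def)
  have two: "S = T" if "S \<in> triangles G" "T \<subseteq> S" for S
  proof -
    have "card S = 3" "card T = 3" using that T by (auto simp: triangles_def)
    then show ?thesis using that card_subset_eq
      by (metis card.infinite less_numeral_extra(3) zero_less_numeral)
  qed
  have i1: "A {a,b} \<inter> A {a,c} = {T}" using TA two abc by (auto simp: A_def)
  have i2: "(A {a,b} \<union> A {a,c}) \<inter> A {b,c} = {T}" using TA two abc by (auto simp: A_def)
  have U: "{S \<in> triangles G. \<exists>e\<in>edges3 T. e \<subseteq> S} = (A {a,b} \<union> A {a,c}) \<union> A {b,c}"
    using abc by (auto simp: A_def edges3_abc)
  have c1: "card (A {a,b} \<union> A {a,c}) + 1 = card (A {a,b}) + card (A {a,c})"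
    using card_Un_Int[OF fin fin, of "{a,b}" "{a,c}"] i1 by simp
  have c2: "card ((A {a,b} \<union> A {a,c}) \<union> A {b,c}) + 1 = card (A {a,b} \<union> A {a,c}) + card (A {b,c})"
    using card_Un_Int[of "A {a,b} \<union> A {a,c}" "A {b,c}"] fin i2 by simp
  have s: "(\<Sum>e\<in>edges3 T. Yc G e) = card (A {a,b}) + card (A {a,c}) + card (A {b,c})"
    using abc by (simp add: edges3_abc Yc_def A_def doubleton_eq_iff)
  show ?thesis using U c1 c2 s by simp
qed

lemma num_tri_remove: assumes w: "wfg n G" and T: "T \<in> triangles G"
  shows "num_triangles (remove_triangle G T) + (\<Sum>e\<in>edges3 T. Yc G e) = num_triangles G + 2"
proof -
  have f: "finite (triangles G)" using finite_triangles[OF w] .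
  have "triangles G = triangles (remove_triangle G T) \<union> {S \<in> triangles G. \<exists>e\<in>edges3 T. e \<subseteq> S}"
    "triangles (remove_triangle G T) \<inter> {S \<in> triangles G. \<exists>e\<in>edges3 T. e \<subseteq> S} = {}"
    by (auto simp: tri_remove)
  then have "card (triangles G) = card (triangles (remove_triangle G T)) + card {S \<in> triangles G. \<exists>e\<in>edges3 T. e \<subseteq> S}"
    using f by (metis (no_types, lifting) card_Un_disjoint finite_Un)
  then show ?thesis using count_removed[OF assms] by (simp add: num_triangles_def)
qed

lemma double_count: assumes w: "wfg n G"
  shows "(\<Sum>T\<in>triangles G. \<Sum>e\<in>edges3 T. h e) = (\<Sum>e\<in>G. h e * real (Yc G e))"
proof -
  have fT: "finite (triangles G)" using finite_triangles[OF w] .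
  have fG: "finite G" using wfg_finite[OF w] .
  have "(\<Sum>T\<in>triangles G. \<Sum>e\<in>edges3 T. h e) = (\<Sum>T\<in>triangles G. \<Sum>e\<in>G. if e \<subseteq> T then h e else 0)"
  proof (rule sum.cong[OF refl])
    fix T assume T: "T \<in> triangles G"
    have "edges3 T = {e \<in> G. e \<subseteq> T}" using edges3_sub[OF T] wfg_edge[OF w]
      by (auto simp: edges3_def)
    then show "(\<Sum>e\<in>edges3 T. h e) = (\<Sum>e\<in>G. if e \<subseteq> T then h e else 0)"
      using fG by (simp add: sum.inter_filter)
  qed
  also have "\<dots> = (\<Sum>e\<in>G. \<Sum>T\<in>triangles G. if e \<subseteq> T then h e else 0)"
    by (rule sum.swap)
  also have "\<dots> = (\<Sum>e\<in>G. h e * real (Yc G e))"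
  proof (rule sum.cong[OF refl])
    fix e
    show "(\<Sum>T\<in>triangles G. if e \<subseteq> T then h e else 0) = h e * real (Yc G e)"
      using fT by (simp add: sum.inter_filter[symmetric] Yc_def mult.commute)
  qed
  finally show ?thesis .
qed


definition thr :: "nat \<Rightarrow> real" where
  "thr n = real n powr (-1/2) * (ln (real n))^2"

definition ff :: "real \<Rightarrow> real" where
  "ff m = m * (m - 3) * (m - 6)"

definition cc :: "nat \<Rightarrow> real \<Rightarrow> real \<Rightarrow> real" where
  "cc n \<alpha> p = \<alpha>^2 * (real n)^2 * p * (Phi p n)^2 / (2 * ff (((real n)^2 * p - real n) / 2))"

definition bign :: "nat \<Rightarrow> real \<Rightarrow> bool" where
  "bign n \<alpha> \<longleftrightarrow> 100 \<le> real n \<and> 1 \<le> ln (real n) \<and> 12 \<le> \<alpha>^2 * (ln (real n))^2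
     \<and> 4 * \<alpha> * exp 1 \<le> ln (real n) \<and> thr n \<le> 1"

lemma bign_thr1: "bign n \<alpha> \<Longrightarrow> thr n \<le> 1" by (simp add: bign_def)

lemma sqrt_thr: "real n > 0 \<Longrightarrow> sqrt (real n) * thr n = (ln (real n))^2"
proof -
  assume n: "real n > 0"
  have "real n powr (-1/2) = 1 / sqrt (real n)"
    using n by (simp add: powr_minus_divide powr_half_sqrt[symmetric])
  then show ?thesis using n by (simp add: thr_def)
qed

lemma Phi_pos: "0 < p \<Longrightarrow> 1 < real n \<Longrightarrow> 0 < Phi p n"
  by (simp add: Phi_def)

lemma Phi_antimono: assumes "0 < p" "p \<le> q" "1 < real n"
  shows "Phi q n \<le> Phi p n"
proof -
  have L: "0 < ln (real n)" using assms by simp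
  have "q powr (- 2 / ln (real n)) \<le> p powr (- 2 / ln (real n))"
    by (rule powr_mono2') (use assms L in \<open>auto simp: divide_nonpos_pos\<close>)
  then show ?thesis unfolding Phi_def using L by (simp add: mult_right_mono)
qed

lemma Phi_ge: assumes "0 < p" "p \<le> 1" "1 < real n"
  shows "ln (real n) \<le> Phi p n"
  using Phi_antimono[OF assms] by (simp add: Phi_def)

lemma Phi_le: assumes n: "1 < real n" and p: "real n powr (-1/2) \<le> p"
  shows "Phi p n \<le> exp 1 * ln (real n)"
proof -
  have L: "0 < ln (real n)" using n by simp
  have pp: "0 < real n powr (-1/2)" using n by simp
  have "p powr (- 2 / ln (real n)) \<le> (real n powr (-1/2)) powr (- 2 / ln (real n))"
    by (rule powr_mono2') (use p pp L in \<open>auto simp: divide_nonpos_pos\<close>)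
  also have "\<dots> = real n powr (1 / ln (real n))" by (simp add: powr_powr)
  also have "\<dots> = exp 1" using n L by (simp add: powr_def)
  finally show ?thesis unfolding Phi_def using L by (simp add: mult_right_mono)
qed

lemma bign_facts: assumes "bign n \<alpha>"
  shows "100 \<le> real n" "1 \<le> ln (real n)" "12 \<le> \<alpha>^2 * (ln (real n))^2" "4 * \<alpha> * exp 1 \<le> ln (real n)"
  using assms by (auto simp: bign_def)

lemma thr_ge: assumes "bign n \<alpha>" shows "real n powr (-1/2) \<le> thr n"
proof -
  have "1 \<le> ln (real n)" using bign_facts[OF assms] by simp
  then have "1 \<le> (ln (real n))^2" by (simp add: one_le_power)
  then show ?thesis unfolding thr_def
    by (metis mult_left_mono mult.right_neutral powr_ge_zero)
qed

lemma thr_pos: assumes "bign n \<alpha>" shows "0 < thr n"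
proof -
  have a: "0 < real n powr (-1/2)" using bign_facts[OF assms] by simp
  show ?thesis using a thr_ge[OF assms] by linarith
qed

lemma Phi_range: assumes "bign n \<alpha>" "thr n \<le> p" "p \<le> 1"
  shows "ln (real n) \<le> Phi p n" "Phi p n \<le> exp 1 * ln (real n)" "0 < Phi p n"
proof -
  have n: "1 < real n" using bign_facts[OF assms(1)] by simp
  have p: "0 < p" using thr_pos[OF assms(1)] assms by simp
  show "ln (real n) \<le> Phi p n" using Phi_ge[OF p assms(3) n] .
  show "Phi p n \<le> exp 1 * ln (real n)" using Phi_le[OF n] thr_ge[OF assms(1)] assms(2) by simp
  show "0 < Phi p n" using Phi_pos[OF p n] .
qed

lemma sqrt_np: assumes "bign n \<alpha>" "thr n \<le> p"
  shows "(ln (real n))^2 \<le> sqrt (real n) * p"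
proof -
  have n: "real n > 0" using bign_facts[OF assms(1)] by simp
  have "sqrt (real n) * thr n \<le> sqrt (real n) * p"
    using assms(2) by (intro mult_left_mono) auto
  then show ?thesis using sqrt_thr[OF n] by simp
qed

lemma sqrt_n_ge: assumes "bign n \<alpha>" shows "10 \<le> sqrt (real n)"
proof -
  have "sqrt 100 \<le> sqrt (real n)" using bign_facts[OF assms] by (subst real_sqrt_le_iff) simp
  moreover have "sqrt 100 = (10::real)" by (simp add: real_sqrt_eq_iff)
  ultimately show ?thesis by simp
qed

lemma four_alpha_Phi: assumes "bign n \<alpha>" "\<alpha> > 0" "thr n \<le> p" "p \<le> 1"
  shows "4 * \<alpha> * Phi p n \<le> sqrt (real n) * p"
proof -
  note f = bign_facts[OF assms(1)]
  have "4 * \<alpha> * Phi p n \<le> 4 * \<alpha> * (exp 1 * ln (real n))"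
    using Phi_range(2)[OF assms(1,3,4)] assms(2) by simp
  also have "\<dots> = (4 * \<alpha> * exp 1) * ln (real n)" by simp
  also have "\<dots> \<le> ln (real n) * ln (real n)" using f by (intro mult_right_mono) auto
  also have "\<dots> \<le> sqrt (real n) * p" using sqrt_np[OF assms(1,3)] by (simp add: power2_eq_square)
  finally show ?thesis .
qed

lemma np_ge: assumes "bign n \<alpha>" "thr n \<le> p"
  shows "10 \<le> real n * p" "10 * real n \<le> (real n)^2 * p"
proof -
  note f = bign_facts[OF assms(1)]
  have s: "sqrt (real n) * sqrt (real n) = real n" by simp
  have a: "1 \<le> sqrt (real n) * p" using sqrt_np[OF assms] f
    by (smt (verit, best) one_le_power)
  have "real n * p = sqrt (real n) * (sqrt (real n) * p)" using s by (simp add: algebra_simps)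
  also have "\<dots> \<ge> 10 * 1" using sqrt_n_ge[OF assms(1)] a by (intro mult_mono) auto
  finally show b: "10 \<le> real n * p" by simp
  have "(real n)^2 * p = real n * (real n * p)" by (simp add: power2_eq_square)
  also have "\<dots> \<ge> real n * 10" using b f by (intro mult_left_mono) auto
  finally show "10 * real n \<le> (real n)^2 * p" by simp
qed

lemma m_ge: assumes "bign n \<alpha>" "thr n \<le> p"
  shows "30 \<le> ((real n)^2 * p - real n) / 2"
  using np_ge(2)[OF assms] bign_facts[OF assms(1)] by simp

lemma ff_pos: "30 \<le> m \<Longrightarrow> 0 < ff m"
  unfolding ff_def by simp

lemma ff_le2: assumes "30 \<le> m - 3" shows "ff m \<le> 2 * ff (m - 3)"
proof -
  have a: "0 \<le> (m - 3) * (m - 6)" using assms by simp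
  have "m \<le> 2 * (m - 9)" using assms by simp
  then have "m * ((m - 3) * (m - 6)) \<le> (2 * (m - 9)) * ((m - 3) * (m - 6))"
    using a by (rule mult_right_mono)
  then show ?thesis unfolding ff_def by (simp add: algebra_simps)
qed

lemma cc_pos: assumes "bign n \<alpha>" "\<alpha> > 0" "thr n \<le> p" "p \<le> 1"
  shows "0 < cc n \<alpha> p"
proof -
  have "0 < ff (((real n)^2 * p - real n) / 2)" using ff_pos m_ge[OF assms(1,3)] by blast
  moreover have "0 < p" using thr_pos[OF assms(1)] assms by simp
  moreover have "0 < Phi p n" using Phi_range[OF assms(1,3,4)] by simp
  moreover have "0 < real n" using bign_facts[OF assms(1)] by simp
  ultimately show ?thesis unfolding cc_def using assms(2) by simp
qed

lemma ff_ratio_mono: assumes "30 \<le> m" "m \<le> m'" "0 \<le> (k::real)"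
  shows "(2 * m' + k) / ff m' \<le> (2 * m + k) / ff m"
proof -
  have p1: "0 < ff m" "0 < ff m'" using ff_pos assms by auto
  have a: "(2 * m' + k) * m \<le> (2 * m + k) * m'" using assms by (simp add: algebra_simps mult_left_mono)
  have b: "(m - 3) * (m - 6) \<le> (m' - 3) * (m' - 6)" using assms by (intro mult_mono) auto
  have "(2 * m' + k) * ff m = ((2 * m' + k) * m) * ((m - 3) * (m - 6))" by (simp add: ff_def algebra_simps)
  also have "\<dots> \<le> ((2 * m + k) * m') * ((m - 3) * (m - 6))"
    using a assms by (intro mult_right_mono) auto
  also have "\<dots> \<le> ((2 * m + k) * m') * ((m' - 3) * (m' - 6))"
    using b assms by (intro mult_left_mono) auto
  also have "\<dots> = (2 * m + k) * ff m'" by (simp add: ff_def algebra_simps)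
  finally show ?thesis using p1 by (simp add: divide_simps)
qed

lemma cc_antimono: assumes "bign n \<alpha>" "\<alpha> > 0" "thr n \<le> p" "p \<le> q" "q \<le> 1"
  shows "cc n \<alpha> q \<le> cc n \<alpha> p"
proof -
  define m where "m = ((real n)^2 * p - real n) / 2"
  define m' where "m' = ((real n)^2 * q - real n) / 2"
  have n: "1 < real n" using bign_facts[OF assms(1)] by simp
  have p0: "0 < p" using thr_pos[OF assms(1)] assms by simp
  have m30: "30 \<le> m" using m_ge[OF assms(1,3)] by (simp add: m_def field_simps)
  have mm: "m \<le> m'" unfolding m_def m'_def using assms(4) by (simp add: mult_left_mono)
  have e1: "(real n)^2 * p = 2 * m + real n" by (simp add: m_def field_simps)
  have e2: "(real n)^2 * q = 2 * m' + real n" by (simp add: m'_def field_simps)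
  have r: "(2 * m' + real n) / ff m' \<le> (2 * m + real n) / ff m"
    using ff_ratio_mono[OF m30 mm] by simp
  have ph: "(Phi q n)^2 \<le> (Phi p n)^2"
    using Phi_antimono[OF p0 assms(4) n] Phi_range(3)[of n \<alpha> q] assms
    by (smt (verit) Phi_range(3) order_trans power_mono)
  have f1: "0 < ff m'" using ff_pos m30 mm by simp
  have f2: "0 < ff m" using ff_pos m30 by simp
  have "cc n \<alpha> q = (\<alpha>^2 / 2) * (Phi q n)^2 * (((real n)^2 * q) / ff m')"
    unfolding cc_def m'_def[symmetric] using f1 by (simp add: field_simps)
  also have "\<dots> = (\<alpha>^2 / 2) * (Phi q n)^2 * ((2 * m' + real n) / ff m')" using e2 by simp
  finally have "cc n \<alpha> q = (\<alpha>^2 / 2) * (Phi q n)^2 * ((2 * m' + real n) / ff m')" .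
  also have "\<dots> \<le> (\<alpha>^2 / 2) * (Phi p n)^2 * ((2 * m + real n) / ff m)"
  proof (rule mult_mono[OF mult_left_mono[OF ph] r])
    show "0 \<le> (2 * m' + real n) / ff m'" using f1 m30 mm by simp
  qed auto
  also have "\<dots> = (\<alpha>^2 / 2) * (Phi p n)^2 * (((real n)^2 * p) / ff m)" using e1 by simp
  also have "\<dots> = cc n \<alpha> p"
    unfolding cc_def m_def[symmetric] using f2 by (simp add: field_simps)
  finally show ?thesis .
qed

lemma var_ratio: assumes "bign n \<alpha>" "\<alpha> > 0" "thr n \<le> p - 6 / (real n)^2" "p \<le> 1"
  defines "m \<equiv> ((real n)^2 * p - real n) / 2"
  shows "9 * (\<alpha> * sqrt (real n) * p * Phi p n)^2 / (ff (m - 3))^2 \<le> (144 / (\<alpha>^2 * (real n)^3)) * (cc n \<alpha> p)^2"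
proof -
  note f = bign_facts[OF assms(1)]
  have n0: "0 < real n" using f by simp
  have m3: "m - 3 = ((real n)^2 * (p - 6 / (real n)^2) - real n) / 2"
    unfolding m_def using n0 by (simp add: field_simps)
  have m30: "30 \<le> m - 3" using m_ge[OF assms(1,3)] m3 by simp
  have p0: "0 < p" using thr_pos[OF assms(1)] assms(3) n0 by (smt (verit) divide_pos_pos zero_less_power)
  have thp: "thr n \<le> p" using assms(3) n0 by (smt (verit) divide_pos_pos zero_less_power)
  have Ph: "1 \<le> Phi p n" using Phi_range(1)[OF assms(1) thp assms(4)] f by simp
  have F1: "0 < ff (m - 3)" using ff_pos m30 by simp
  have F2: "0 < ff m" using ff_pos m30 by simp
  have "ff m \<le> 2 * ff (m - 3)" using ff_le2 m30 by simp
  also have "\<dots> \<le> 2 * Phi p n * ff (m - 3)" using Ph F1 by simp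
  finally have A: "ff m \<le> 2 * Phi p n * ff (m - 3)" .
  have B: "(ff m)^2 \<le> 4 * (Phi p n)^2 * (ff (m - 3))^2"
    using power_mono[OF A, of 2] F2 by (simp add: power_mult_distrib)
  define K where "K = \<alpha>^2 * real n * p^2 * (Phi p n)^2"
  have K0: "0 \<le> K" unfolding K_def using n0 by simp
  have L: "(\<alpha> * sqrt (real n) * p * Phi p n)^2 = K"
    unfolding K_def using n0 by (simp add: power_mult_distrib)
  have R: "(144 / (\<alpha>^2 * (real n)^3)) * (cc n \<alpha> p)^2 = 36 * K * (Phi p n)^2 / (ff m)^2"
    unfolding K_def cc_def m_def[symmetric] using n0 assms(2) F2
    by (simp add: field_simps power2_eq_square power3_eq_cube)
  have "9 * K * (ff m)^2 \<le> 9 * K * (4 * (Phi p n)^2 * (ff (m - 3))^2)"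
    using B K0 by (intro mult_left_mono) auto
  then have "9 * K / (ff (m - 3))^2 \<le> 36 * K * (Phi p n)^2 / (ff m)^2"
    using F1 F2 by (simp add: divide_simps)
  then show ?thesis using L R by simp
qed

lemma tele: fixes N :: real and i :: nat
  assumes "30 \<le> N - 3 * real i"
  shows "ff (N - 3 * real i) * (\<Sum>j<i. 1 / ff (N - 3 * (real j + 1))) \<le> (N - 3 * real i) / 6"
proof -
  define g where "g x = 1 / (x * (x - 3))" for x :: real
  define a where "a j = g (N - 3 * (real j + 1))" for j :: nat
  have t: "1 / ff (N - 3 * (real j + 1)) = (a (Suc j) - a j) / 6" if "j < i" for j
  proof -
    have j: "real j + 1 \<le> real i" using that by simp
    define x where "x = N - 3 * (real j + 1)"
    have x30: "30 \<le> x" unfolding x_def using assms j by simp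
    have "a (Suc j) = g (x - 3)" unfolding a_def x_def by (simp add: algebra_simps)
    moreover have "a j = g x" unfolding a_def x_def by simp
    moreover have "1 / ff x = (g (x - 3) - g x) / 6"
    proof -
      have nz: "x \<noteq> 0" "x - 3 \<noteq> 0" "x - 6 \<noteq> 0" using x30 by auto
      have "g (x - 3) - g x = 1 / ((x - 3) * (x - 6)) - 1 / (x * (x - 3))"
        unfolding g_def by (simp add: algebra_simps)
      also have "\<dots> = (x - (x - 6)) / (x * (x - 3) * (x - 6))"
        using nz by (simp add: divide_simps)
      also have "\<dots> = 6 / ff x" unfolding ff_def by simp
      finally show ?thesis by simp
    qed
    ultimately show ?thesis unfolding x_def by simp
  qed
  have "(\<Sum>j<i. 1 / ff (N - 3 * (real j + 1))) = (\<Sum>j<i. (a (Suc j) - a j) / 6)"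
    using t by (intro sum.cong) auto
  also have "\<dots> = (a i - a 0) / 6"
    by (simp add: sum_divide_distrib[symmetric] sum_lessThan_telescope)
  also have "\<dots> \<le> a i / 6"
  proof -
    have "0 \<le> a 0" unfolding a_def g_def using assms by simp
    then show ?thesis by simp
  qed
  finally have S: "(\<Sum>j<i. 1 / ff (N - 3 * (real j + 1))) \<le> a i / 6" .
  define y where "y = N - 3 * real i"
  have y30: "30 \<le> y" using assms y_def by simp
  have ai: "a i = 1 / ((y - 3) * (y - 6))" unfolding a_def g_def y_def by (simp add: algebra_simps)
  have Fy: "0 < ff y" using ff_pos y30 by simp
  have "ff y * (\<Sum>j<i. 1 / ff (N - 3 * (real j + 1))) \<le> ff y * (a i / 6)"
    using S Fy by (intro mult_left_mono) auto
  also have "\<dots> = y / 6"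
  proof -
    define z where "z = (y - 3) * (y - 6)"
    have nz: "z \<noteq> 0" using y30 z_def by simp
    have "ff y = y * z" unfolding ff_def z_def by (simp add: mult.assoc)
    moreover have "a i = 1 / z" using ai z_def by simp
    ultimately show ?thesis using nz by simp
  qed
  finally show ?thesis unfolding y_def .
qed

lemma frac_le_helper: fixes A D x n :: real
  assumes "0 < D" "0 < n" "n * A \<le> x * D" shows "A / D \<le> x / n"
proof -
  have "A / D = (n * A) / (n * D)" using assms by simp
  also have "\<dots> \<le> (x * D) / (n * D)" using assms by (intro divide_right_mono) auto
  also have "\<dots> = x / n" using assms by simp
  finally show ?thesis .
qed

lemma frac_ge_helper: fixes A D x n :: real
  assumes "0 < D" "0 < n" "x * D \<le> n * A" shows "x / n \<le> A / D"
proof -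
  have "x / n = (x * D) / (n * D)" using assms by simp
  also have "\<dots> \<le> (n * A) / (n * D)" using assms by (intro divide_right_mono) auto
  also have "\<dots> = A / D" using assms by simp
  finally show ?thesis .
qed

lemma ratio_bounds: fixes n x s :: real
  assumes "12 \<le> n" "2 \<le> x" "x \<le> n" "0 \<le> s" "s \<le> 6" "30 \<le> (n*x - n)/2"
  shows "(x - 2) / n \<le> ((n*x - n)/2 - s) / (n*(n-1)/2 - s)"
    "((n*x - n)/2 - s) / (n*(n-1)/2 - s) \<le> x / n"
proof -
  have N: "0 < n*(n-1)/2 - s"
  proof -
    have "n * 11 \<le> n * (n - 1)" using assms by (intro mult_left_mono) auto
    then show ?thesis using assms by linarith
  qed
  have n0: "0 < n" using assms by simp
  have a: "(n - x) * (n/2 + s) \<ge> 0" using assms by simp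
  have eq: "x * (n*(n-1)/2 - s) - n * ((n*x - n)/2 - s) = (n - x) * (n/2 + s)"
    by (simp add: field_simps)
  have "0 \<le> x * (n*(n-1)/2 - s) - n * ((n*x - n)/2 - s)" unfolding eq using a .
  then have "n * ((n*x - n)/2 - s) \<le> x * (n*(n-1)/2 - s)" by (simp only: diff_ge_0_iff_ge)
  then show "((n*x - n)/2 - s) / (n*(n-1)/2 - s) \<le> x / n"
    using N n0 by (intro frac_le_helper) auto
  have b1: "0 \<le> n * (n - 2 * s)" using assms by simp
  have b2: "0 \<le> n * (x - 2)" using assms by simp
  have b3: "0 \<le> s * (x - 2)" using assms by simp
  have eq2: "n * ((n*x - n)/2 - s) - (x - 2) * (n*(n-1)/2 - s) = n * (n - 2 * s) / 2 + n * (x - 2) / 2 + s * (x - 2)"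
    by (simp add: field_simps)
  have "0 \<le> n * (n - 2 * s) / 2 + n * (x - 2) / 2 + s * (x - 2)" using b1 b2 b3 by simp
  then have "0 \<le> n * ((n*x - n)/2 - s) - (x - 2) * (n*(n-1)/2 - s)" unfolding eq2 .
  then have "(x - 2) * (n*(n-1)/2 - s) \<le> n * ((n*x - n)/2 - s)" by (simp only: diff_ge_0_iff_ge)
  then show "(x - 2) / n \<le> ((n*x - n)/2 - s) / (n*(n-1)/2 - s)"
    using N n0 by (intro frac_ge_helper) auto
qed

lemma prod3_bounds: fixes a b c lo hi :: real
  assumes "0 \<le> lo" "lo \<le> a" "a \<le> hi" "lo \<le> b" "b \<le> hi" "lo \<le> c" "c \<le> hi"
  shows "lo^3 \<le> a * b * c" "a * b * c \<le> hi^3"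
proof -
  have "lo * lo \<le> a * b" using assms by (intro mult_mono) auto
  then have "lo * lo * lo \<le> a * b * c" using assms by (intro mult_mono) auto
  then show "lo^3 \<le> a * b * c" by (simp add: power3_eq_cube)
  have "a * b \<le> hi * hi" using assms by (intro mult_mono) auto
  then have "a * b * c \<le> hi * hi * hi" using assms by (intro mult_mono) auto
  then show "a * b * c \<le> hi^3" by (simp add: power3_eq_cube)
qed

lemma E1: fixes n x :: real
  assumes "12 \<le> n" "2 \<le> x" "x \<le> n" "30 \<le> (n*x - n)/2"
  shows "\<bar>ff ((n*x - n)/2) * (n*(n-1)*(n-2)/6) / ff (n*(n-1)/2) - x^3/6\<bar> \<le> 3/2 * n * x"
proof -
  define m where "m = (n*x - n)/2"
  define N where "N = n*(n-1)/2"
  define r where "r s = (m - s) / (N - s)" for s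
  have n0: "0 < n" using assms by simp
  have Npos: "30 < N"
  proof -
    have "n * 11 \<le> n * (n - 1)" using assms by (intro mult_left_mono) auto
    then show ?thesis using assms N_def by linarith
  qed
  have rb: "(x - 2) / n \<le> r s" "r s \<le> x / n" if "0 \<le> s" "s \<le> 6" for s
    using ratio_bounds[OF assms(1-3) that assms(4)] unfolding r_def m_def N_def by auto
  have lo0: "0 \<le> (x - 2) / n" using assms by simp
  have P: "ff m / ff N = r 0 * r 3 * r 6"
    unfolding ff_def r_def using Npos by (simp add: field_simps)
  have Pl: "((x - 2) / n)^3 \<le> r 0 * r 3 * r 6" and Pu: "r 0 * r 3 * r 6 \<le> (x / n)^3"
  proof -
    have b0: "(x-2)/n \<le> r 0" "r 0 \<le> x/n" using rb[of 0] by auto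
    have b3: "(x-2)/n \<le> r 3" "r 3 \<le> x/n" using rb[of 3] by auto
    have b6: "(x-2)/n \<le> r 6" "r 6 \<le> x/n" using rb[of 6] by auto
    show "((x - 2) / n)^3 \<le> r 0 * r 3 * r 6" "r 0 * r 3 * r 6 \<le> (x / n)^3"
      using prod3_bounds[OF lo0 b0(1) b0(2) b3(1) b3(2) b6(1) b6(2)] by auto
  qed
  define C where "C = n*(n-1)*(n-2)/6"
  have Cu: "C \<le> n^3/6" unfolding C_def using assms by (simp add: algebra_simps power3_eq_cube)
  have Cl: "n^3/6 - n^2/2 \<le> C" unfolding C_def using assms by (simp add: algebra_simps power3_eq_cube power2_eq_square)
  have C0: "0 \<le> n^3/6 - n^2/2"
  proof -
    have "n^2 * 3 \<le> n^2 * n" using assms by (intro mult_left_mono) auto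
    then show ?thesis by (simp add: power3_eq_cube power2_eq_square algebra_simps)
  qed
  have "ff m * C / ff N = C * (ff m / ff N)" by (simp add: mult.commute)
  then have E: "ff m * C / ff N = C * (r 0 * r 3 * r 6)" using P by simp
  have up: "C * (r 0 * r 3 * r 6) \<le> x^3/6"
  proof -
    have "C * (r 0 * r 3 * r 6) \<le> (n^3/6) * (x/n)^3"
      using Cu Pu Pl lo0 C0 Cl n0 by (intro mult_mono) (auto intro: order_trans[OF zero_le_power[OF lo0]])
    also have "\<dots> = x^3/6" using n0 by (simp add: power_divide)
    finally show ?thesis .
  qed
  have lw: "(x-2)^3/6 - (x-2)^3/(2*n) \<le> C * (r 0 * r 3 * r 6)"
  proof -
    have "(n^3/6 - n^2/2) * ((x - 2) / n)^3 \<le> C * (r 0 * r 3 * r 6)"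
      using Cl Pl C0 lo0 by (intro mult_mono) auto
    moreover have "(n^3/6 - n^2/2) * ((x - 2) / n)^3 = (x-2)^3/6 - (x-2)^3/(2*n)"
      using n0 by (simp add: power_divide field_simps power3_eq_cube power2_eq_square)
    ultimately show ?thesis by simp
  qed
  have d1: "x^3 - (x-2)^3 \<le> 6 * x^2"
  proof -
    have "x^3 - (x-2)^3 = 6 * x^2 - 12 * x + 8" by (simp add: power3_eq_cube power2_eq_square algebra_simps)
    then show ?thesis using assms by simp
  qed
  have d2: "(x-2)^3 \<le> x^3" using assms by (intro power_mono) auto
  have d3: "x^2 \<le> n * x" using assms by (simp add: power2_eq_square mult_right_mono)
  have d4: "x^3 / n \<le> n * x"
  proof -
    have "x^3 \<le> n * n * x" using assms
      by (simp add: power3_eq_cube mult_mono mult_right_mono)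
    then show ?thesis using n0 by (simp add: divide_simps mult.commute mult.left_commute)
  qed
  have "x^3/6 - C * (r 0 * r 3 * r 6) \<le> (x^3 - (x-2)^3)/6 + (x-2)^3/(2*n)"
  proof -
    have key: "\<And>a b c P::real. b/6 - c \<le> P \<Longrightarrow> a/6 - P \<le> (a - b)/6 + c" by argo
    show ?thesis by (rule key[OF lw])
  qed
  also have "\<dots> \<le> x^2 + x^3/(2*n)"
  proof -
    have h: "(x-2)^3/(2*n) \<le> x^3/(2*n)" using d2 n0 by (simp add: divide_right_mono)
    have key2: "\<And>A q c d::real. A \<le> 6*q \<Longrightarrow> c \<le> d \<Longrightarrow> A/6 + c \<le> q + d" by argo
    show ?thesis by (rule key2[OF d1 h])
  qed
  also have "\<dots> \<le> n * x + n * x / 2"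
  proof -
    have "x^3/(2*n) = (x^3/n)/2" by simp
    then have h: "x^3/(2*n) \<le> n * x / 2" using d4 by simp
    have key3: "\<And>a b c d::real. a \<le> b \<Longrightarrow> c \<le> d \<Longrightarrow> a + c \<le> b + d" by argo
    show ?thesis by (rule key3[OF d3 h])
  qed
  finally have lo: "x^3/6 - C * (r 0 * r 3 * r 6) \<le> 3/2 * n * x" by simp
  have "0 \<le> n * x" using assms by simp
  then show ?thesis using up lo E unfolding m_def[symmetric] N_def[symmetric] C_def[symmetric] by simp
qed


definition pc :: "nat \<Rightarrow> nat set set \<Rightarrow> real" where
  "pc n G = (2 * real (card G) + real n) / (real n)^2"

definition eps :: "nat \<Rightarrow> real \<Rightarrow> real \<Rightarrow> real" where
  "eps n \<alpha> p = \<alpha> * sqrt (real n) * p * Phi p n"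

definition codeg_ok :: "nat \<Rightarrow> real \<Rightarrow> nat set set \<Rightarrow> bool" where
  "codeg_ok n \<alpha> G \<longleftrightarrow> (\<forall>u<n. \<forall>v<n. u \<noteq> v \<longrightarrow>
      \<bar>real (codeg G u v) - real n * (pc n G)^2\<bar> \<le> eps n \<alpha> (pc n G))"

definition goodG :: "nat \<Rightarrow> real \<Rightarrow> nat set set \<Rightarrow> bool" where
  "goodG n \<alpha> G \<longleftrightarrow> triangles G \<noteq> {} \<and> thr n \<le> pc n G - 6 / (real n)^2 \<and> codeg_ok n \<alpha> G"

definition Wf :: "nat set set \<Rightarrow> real" where
  "Wf G = real (num_triangles G) / ff (real (card G))"

definition EW :: "nat set set \<Rightarrow> real" where
  "EW G = (\<Sum>T\<in>triangles G. Wf (remove_triangle G T)) / real (card (triangles G))"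

lemma sq_identity: fixes h :: "'a \<Rightarrow> real"
  assumes "finite A" "A \<noteq> {}"
  defines "\<mu> \<equiv> (\<Sum>x\<in>A. h x) / real (card A)"
  shows "(\<Sum>x\<in>A. (h x - c)^2) = (\<Sum>x\<in>A. (h x - \<mu>)^2) + real (card A) * (\<mu> - c)^2"
proof -
  have k: "real (card A) > 0" using assms by auto
  have z: "(\<Sum>x\<in>A. (h x - \<mu>)) = 0"
    using k by (simp add: sum_subtractf \<mu>_def)
  have "(\<Sum>x\<in>A. (h x - c)^2) = (\<Sum>x\<in>A. (h x - \<mu>)^2 + 2 * (\<mu> - c) * (h x - \<mu>) + (\<mu> - c)^2)"
    by (intro sum.cong) (auto simp: power2_eq_square algebra_simps)
  also have "\<dots> = (\<Sum>x\<in>A. (h x - \<mu>)^2) + 2 * (\<mu> - c) * (\<Sum>x\<in>A. (h x - \<mu>)) + real (card A) * (\<mu> - c)^2"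
    by (simp add: sum.distrib sum_distrib_left)
  finally show ?thesis using z by simp
qed

lemma avg_sq_le: fixes h :: "'a \<Rightarrow> real"
  assumes "finite A" "A \<noteq> {}"
  shows "(\<Sum>x\<in>A. (h x - (\<Sum>y\<in>A. h y) / real (card A))^2) \<le> (\<Sum>x\<in>A. (h x - c)^2)"
  using sq_identity[OF assms, of h c] by simp

lemma pc_ge_thr: "thr n \<le> pc n G - 6 / (real n)^2 \<Longrightarrow> 0 < real n \<Longrightarrow> thr n \<le> pc n G"
proof -
  assume a: "thr n \<le> pc n G - 6 / (real n)^2" and n: "0 < real n"
  have "0 < 6 / (real n)^2" using n by simp
  then show ?thesis using a by linarith
qed

lemma card_le_complete: "wfg n G \<Longrightarrow> card G \<le> n * (n - 1) div 2"
proof -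
  assume w: "wfg n G"
  have "card G \<le> card (complete_graph n)" using w finite_complete_graph unfolding wfg_def
    by (rule card_mono[rotated])
  also have "complete_graph n = {e. e \<subseteq> {..<n} \<and> card e = 2}" by (rule complete_graph_alt)
  also have "card \<dots> = n choose 2" using n_subsets[of "{..<n}" 2] by (simp add: conj_commute)
  finally show ?thesis by (simp add: choose_two)
qed

lemma pc_le1: assumes "wfg n G" "0 < n" shows "pc n G \<le> 1"
proof -
  have "2 * card G \<le> n * (n - 1)" using card_le_complete[OF assms(1)] by linarith
  then have "real (2 * card G) \<le> real (n * (n - 1))" by (simp only: of_nat_le_iff)
  then have "2 * real (card G) \<le> real n * (real n - 1)" using assms(2) by (simp add: of_nat_diff)
  then have "2 * real (card G) + real n \<le> (real n)^2" by (simp add: power2_eq_square algebra_simps)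
  then show ?thesis unfolding pc_def using assms(2) by (simp add: divide_simps)
qed

lemma Yc_close: assumes w: "wfg n G" and ok: "codeg_ok n \<alpha> G" and e: "e \<in> G"
  shows "\<bar>real (Yc G e) - real n * (pc n G)^2\<bar> \<le> eps n \<alpha> (pc n G)"
proof -
  have "e \<subseteq> {..<n}" "card e = 2" using wfg_edge[OF w e] by auto
  then obtain u v where uv: "e = {u,v}" "u \<noteq> v" "u < n" "v < n" by (auto simp: card_2_iff)
  then have "Yc G e = codeg G u v" using Yc_codeg[OF w] e by simp
  then show ?thesis using ok uv unfolding codeg_ok_def by simp
qed

lemma m_pc: "0 < n \<Longrightarrow> real (card G) = ((real n)^2 * pc n G - real n) / 2"
  unfolding pc_def by (simp add: field_simps)

lemma m3_ge: assumes "bign n \<alpha>" "thr n \<le> pc n G - 6 / (real n)^2"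
  shows "30 \<le> real (card G) - 3"
proof -
  have n: "0 < real n" using bign_facts[OF assms(1)] by simp
  have a: "(real n)^2 * (pc n G - 6 / (real n)^2) = (real n)^2 * pc n G - 6"
    using n by (simp add: right_diff_distrib)
  have "real (card G) - 3 = ((real n)^2 * (pc n G - 6 / (real n)^2) - real n) / 2"
    unfolding a using m_pc[of n G] n by simp
  then show ?thesis using m_ge[OF assms] by simp
qed

lemma step_facts: assumes w: "wfg n G" and ne: "triangles G \<noteq> {}"
  shows "0 < real (card (triangles G))"
    "\<And>T. T \<in> triangles G \<Longrightarrow> real (num_triangles (remove_triangle G T)) =
        real (card (triangles G)) + 2 - (\<Sum>e\<in>edges3 T. real (Yc G e))"
    "\<And>T. T \<in> triangles G \<Longrightarrow> real (card (remove_triangle G T)) = real (card G) - 3"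
    "(\<Sum>e\<in>G. real (Yc G e)) = 3 * real (card (triangles G))"
    "(\<Sum>T\<in>triangles G. (\<Sum>e\<in>edges3 T. real (Yc G e))) = (\<Sum>e\<in>G. (real (Yc G e))^2)"
proof -
  show "0 < real (card (triangles G))" using finite_triangles[OF w] ne by (simp add: card_gt_0_iff)
  show "real (num_triangles (remove_triangle G T)) =
        real (card (triangles G)) + 2 - (\<Sum>e\<in>edges3 T. real (Yc G e))" if T: "T \<in> triangles G" for T
  proof -
    have "real (num_triangles (remove_triangle G T) + (\<Sum>e\<in>edges3 T. Yc G e)) = real (num_triangles G + 2)"
      using num_tri_remove[OF w T] by simp
    then show ?thesis by (simp add: num_triangles_def)
  qed
  show "real (card (remove_triangle G T)) = real (card G) - 3" if T: "T \<in> triangles G" for T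
  proof -
    have "3 \<le> card G"
    proof -
      have "card (edges3 T) \<le> card G" using edges3_sub[OF T] wfg_finite[OF w] by (rule card_mono[rotated])
      then show ?thesis using card_edges3[OF T] by simp
    qed
    then show ?thesis using card_remove[OF w T] by (simp add: of_nat_diff)
  qed
  have "(\<Sum>T\<in>triangles G. \<Sum>e\<in>edges3 T. (1::real)) = (\<Sum>e\<in>G. 1 * real (Yc G e))"
    by (rule double_count[OF w])
  moreover have "(\<Sum>T\<in>triangles G. \<Sum>e\<in>edges3 T. (1::real)) = (\<Sum>T\<in>triangles G. 3)"
    by (intro sum.cong) (auto simp: card_edges3)
  ultimately show "(\<Sum>e\<in>G. real (Yc G e)) = 3 * real (card (triangles G))" by simp
  show "(\<Sum>T\<in>triangles G. (\<Sum>e\<in>edges3 T. real (Yc G e))) = (\<Sum>e\<in>G. (real (Yc G e))^2)"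
    using double_count[OF w, of "\<lambda>e. real (Yc G e)"] by (simp add: power2_eq_square)
qed

lemma var_formula: fixes h :: "'a \<Rightarrow> real"
  assumes "finite A" "A \<noteq> {}"
  shows "(\<Sum>x\<in>A. (h x - (\<Sum>y\<in>A. h y) / real (card A))^2) =
     (\<Sum>x\<in>A. (h x)^2) - (\<Sum>y\<in>A. h y)^2 / real (card A)"
proof -
  define k where "k = real (card A)"
  define s where "s = (\<Sum>y\<in>A. h y)"
  have k: "k > 0" using assms k_def by auto
  have "(\<Sum>x\<in>A. (h x - s / k)^2) = (\<Sum>x\<in>A. (h x)^2 - 2 * (s / k) * h x + (s / k)^2)"
    by (intro sum.cong) (auto simp: power2_eq_square algebra_simps)
  also have "\<dots> = (\<Sum>x\<in>A. (h x)^2) - 2 * (s / k) * s + k * (s / k)^2"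
    by (simp add: sum.distrib sum_subtractf sum_distrib_left s_def k_def)
  also have "\<dots> = (\<Sum>x\<in>A. (h x)^2) - s^2 / k"
    using k by (simp add: field_simps power2_eq_square)
  finally show ?thesis unfolding s_def k_def .
qed

lemma eps_le_c: assumes "bign n \<alpha>" "\<alpha> > 0" "thr n \<le> p" "p \<le> 1"
  shows "4 * eps n \<alpha> p \<le> real n * p^2" "0 \<le> eps n \<alpha> p"
    "(eps n \<alpha> p)^2 = real n * p^2 * (\<alpha>^2 * (Phi p n)^2)"
proof -
  have n: "0 < real n" using bign_facts[OF assms(1)] by simp
  have p: "0 < p" using thr_pos[OF assms(1)] assms by simp
  have a: "4 * \<alpha> * Phi p n \<le> sqrt (real n) * p" using four_alpha_Phi[OF assms] .
  have Ph: "0 < Phi p n" using Phi_range(3)[OF assms(1,3,4)] .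
  have "4 * eps n \<alpha> p = (sqrt (real n) * p) * (4 * \<alpha> * Phi p n)" unfolding eps_def by simp
  also have "\<dots> \<le> (sqrt (real n) * p) * (sqrt (real n) * p)" using a n p by (intro mult_left_mono) auto
  also have "\<dots> = real n * p^2" using n by (simp add: power2_eq_square)
  finally show "4 * eps n \<alpha> p \<le> real n * p^2" .
  show "0 \<le> eps n \<alpha> p" unfolding eps_def using assms(2) p Ph by simp
  show "(eps n \<alpha> p)^2 = real n * p^2 * (\<alpha>^2 * (Phi p n)^2)"
    unfolding eps_def using n by (simp add: power_mult_distrib)
qed

lemma drift_bound: assumes big: "bign n \<alpha>" and al: "\<alpha> > 0" and w: "wfg n G" and g: "goodG n \<alpha> G"
  shows "\<bar>EW G - Wf G\<bar> \<le> (2 + 4 * \<alpha>^2 * (Phi (pc n G) n)^2) / ff (real (card G) - 3)"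
proof -
  have ne: "triangles G \<noteq> {}" and th: "thr n \<le> pc n G - 6 / (real n)^2" and ok: "codeg_ok n \<alpha> G"
    using g by (auto simp: goodG_def)
  have n0: "0 < real n" using bign_facts[OF big] by simp
  define p where "p = pc n G"
  have thp: "thr n \<le> p" using pc_ge_thr[OF th n0] p_def by simp
  have p1: "p \<le> 1" using pc_le1[OF w] n0 p_def by simp
  have p0: "0 < p" using thr_pos[OF big] thp by simp
  define Q where "Q = real (card (triangles G))"
  define m where "m = real (card G)"
  define S where "S T = (\<Sum>e\<in>edges3 T. real (Yc G e))" for T
  define Y2 where "Y2 = (\<Sum>e\<in>G. (real (Yc G e))^2)"
  define c where "c = real n * p^2"
  define \<epsilon> where "\<epsilon> = eps n \<alpha> p"
  note sf = step_facts[OF w ne]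
  have Q0: "0 < Q" using sf(1) Q_def by simp
  have m30: "30 \<le> m - 3" using m3_ge[OF big th] m_def by simp
  have F3: "0 < ff (m - 3)" using ff_pos m30 by simp
  have Fm: "0 < ff m" using ff_pos m30 by simp
  have c0: "0 < c" using n0 p0 c_def by simp
  have ec: "4 * \<epsilon> \<le> c" "0 \<le> \<epsilon>" "\<epsilon>^2 = c * (\<alpha>^2 * (Phi p n)^2)"
    using eps_le_c[OF big al thp p1] unfolding \<epsilon>_def c_def by auto
  have Wr: "Wf (remove_triangle G T) = (Q + 2 - S T) / ff (m - 3)" if "T \<in> triangles G" for T
    unfolding Wf_def using sf(2)[OF that] sf(3)[OF that] by (simp add: Q_def m_def S_def num_triangles_def)
  have sumS: "(\<Sum>T\<in>triangles G. S T) = Y2" using sf(5) unfolding S_def Y2_def .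
  have fT: "finite (triangles G)" using finite_triangles[OF w] .
  have EWf: "EW G = (Q * (Q + 2) - Y2) / (Q * ff (m - 3))"
  proof -
    have "(\<Sum>T\<in>triangles G. Wf (remove_triangle G T)) = (\<Sum>T\<in>triangles G. (Q + 2 - S T) / ff (m - 3))"
      using Wr by (intro sum.cong) auto
    also have "\<dots> = (\<Sum>T\<in>triangles G. (Q + 2 - S T)) / ff (m - 3)" by (simp add: sum_divide_distrib)
    also have "(\<Sum>T\<in>triangles G. (Q + 2 - S T)) = Q * (Q + 2) - Y2"
      using sumS by (simp add: sum_subtractf Q_def)
    finally show ?thesis unfolding EW_def Q_def[symmetric] by (simp add: field_simps)
  qed
  have Wg: "Wf G = Q / ff m" unfolding Wf_def Q_def m_def num_triangles_def by simp
  define V where "V = Y2 - 9 * Q^2 / m"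
  have D: "EW G - Wf G = (2 - V / Q) / ff (m - 3)"
  proof -
    define R where "R = (m - 3) * (m - 6)"
    have R0: "0 < R" using m30 R_def by simp
    have e1: "ff m = m * R" unfolding ff_def R_def by (simp add: mult.assoc)
    have e2: "ff (m - 3) = R * (m - 9)" unfolding ff_def R_def by (simp add: algebra_simps)
    have m9: "m - 9 \<noteq> 0" "m \<noteq> 0" using m30 by auto
    show ?thesis unfolding EWf Wg e1 e2 V_def using R0 Q0 m9
      by (simp add: field_simps power2_eq_square)
  qed
  have fG: "finite G" using wfg_finite[OF w] .
  have Gne: "G \<noteq> {}" using ne edges3_sub card_edges3 by (metis all_not_in_conv card.empty subset_empty zero_neq_numeral)
  have cardG: "real (card G) = m" using m_def by simp
  have sumY: "(\<Sum>e\<in>G. real (Yc G e)) = 3 * Q" using sf(4) Q_def by simp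
  have Vf: "V = (\<Sum>e\<in>G. (real (Yc G e) - (\<Sum>y\<in>G. real (Yc G y)) / real (card G))^2)"
    using var_formula[OF fG Gne, of "\<lambda>e. real (Yc G e)"] unfolding V_def Y2_def sumY cardG
    by (simp add: power_mult_distrib)
  have V0: "0 \<le> V" unfolding Vf by (intro sum_nonneg) auto
  have close: "\<bar>real (Yc G e) - c\<bar> \<le> \<epsilon>" if "e \<in> G" for e
    using Yc_close[OF w ok that] unfolding c_def \<epsilon>_def p_def .
  have Vle: "V \<le> m * \<epsilon>^2"
  proof -
    have "V \<le> (\<Sum>e\<in>G. (real (Yc G e) - c)^2)" unfolding Vf by (rule avg_sq_le[OF fG Gne])
    also have "\<dots> \<le> (\<Sum>e\<in>G. \<epsilon>^2)"
    proof (rule sum_mono)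
      fix e assume "e \<in> G"
      then have "\<bar>real (Yc G e) - c\<bar> \<le> \<epsilon>" by (rule close)
      then have "\<bar>real (Yc G e) - c\<bar>^2 \<le> \<epsilon>^2" by (rule power_mono) simp
      then show "(real (Yc G e) - c)^2 \<le> \<epsilon>^2" by simp
    qed
    also have "\<dots> = m * \<epsilon>^2" using cardG by simp
    finally show ?thesis .
  qed
  have Qlow: "m * c / 4 \<le> Q"
  proof -
    have "(\<Sum>e\<in>G. c - \<epsilon>) \<le> (\<Sum>e\<in>G. real (Yc G e))"
    proof (rule sum_mono)
      fix e assume "e \<in> G" then have "\<bar>real (Yc G e) - c\<bar> \<le> \<epsilon>" by (rule close)
      then show "c - \<epsilon> \<le> real (Yc G e)" by linarith
    qed
    then have "m * (c - \<epsilon>) \<le> 3 * Q" using sumY cardG by simp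
    moreover have "m * (3 * c / 4) \<le> m * (c - \<epsilon>)" using ec m30 by (intro mult_left_mono) auto
    ultimately show ?thesis by simp
  qed
  have mc0: "0 < m * c / 4" using m30 c0 by simp
  have VQ: "V / Q \<le> 4 * \<alpha>^2 * (Phi p n)^2"
  proof -
    have X0: "0 \<le> m * c * (\<alpha>^2 * (Phi p n)^2)" using m30 c0 by simp
    have "V / Q \<le> (m * c * (\<alpha>^2 * (Phi p n)^2)) / Q"
      using Vle ec(3) Q0 by (intro divide_right_mono) (auto simp: mult.assoc)
    also have "\<dots> \<le> (m * c * (\<alpha>^2 * (Phi p n)^2)) / (m * c / 4)"
      using X0 Qlow mc0 by (intro divide_left_mono) auto
    also have "\<dots> = 4 * \<alpha>^2 * (Phi p n)^2"
    proof -
      have "m \<noteq> 0" "c \<noteq> 0" using m30 c0 by auto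
      then show ?thesis by (simp add: field_simps)
    qed
    finally show ?thesis .
  qed
  have VQ0: "0 \<le> V / Q" using V0 Q0 by simp
  have "\<bar>EW G - Wf G\<bar> = \<bar>2 - V / Q\<bar> / ff (m - 3)" unfolding D using F3 by (simp add: abs_divide)
  also have "\<dots> \<le> (2 + 4 * \<alpha>^2 * (Phi p n)^2) / ff (m - 3)"
  proof (rule divide_right_mono)
    show "\<bar>2 - V / Q\<bar> \<le> 2 + 4 * \<alpha>^2 * (Phi p n)^2" using VQ VQ0 by linarith
  qed (use F3 in simp)
  finally show ?thesis unfolding p_def m_def .
qed

lemma var_bound: assumes big: "bign n \<alpha>" and al: "\<alpha> > 0" and w: "wfg n G" and g: "goodG n \<alpha> G"
  shows "(\<Sum>T\<in>triangles G. (Wf (remove_triangle G T) - EW G)^2)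
     \<le> real (card (triangles G)) * (9 * (eps n \<alpha> (pc n G))^2 / (ff (real (card G) - 3))^2)"
proof -
  have ne: "triangles G \<noteq> {}" and th: "thr n \<le> pc n G - 6 / (real n)^2" and ok: "codeg_ok n \<alpha> G"
    using g by (auto simp: goodG_def)
  have n0: "0 < real n" using bign_facts[OF big] by simp
  define p where "p = pc n G"
  have thp: "thr n \<le> p" using pc_ge_thr[OF th n0] p_def by simp
  have p1: "p \<le> 1" using pc_le1[OF w] n0 p_def by simp
  define Q where "Q = real (card (triangles G))"
  define m where "m = real (card G)"
  define S where "S T = (\<Sum>e\<in>edges3 T. real (Yc G e))" for T
  define c where "c = real n * p^2"
  define \<epsilon> where "\<epsilon> = eps n \<alpha> p"
  note sf = step_facts[OF w ne]
  have m30: "30 \<le> m - 3" using m3_ge[OF big th] m_def by simp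
  have F3: "0 < ff (m - 3)" using ff_pos m30 by simp
  have e0: "0 \<le> \<epsilon>" using eps_le_c(2)[OF big al thp p1] \<epsilon>_def by simp
  have Wr: "Wf (remove_triangle G T) = (Q + 2 - S T) / ff (m - 3)" if "T \<in> triangles G" for T
    unfolding Wf_def using sf(2)[OF that] sf(3)[OF that] by (simp add: Q_def m_def S_def num_triangles_def)
  have fT: "finite (triangles G)" using finite_triangles[OF w] .
  have close: "\<bar>real (Yc G e) - c\<bar> \<le> \<epsilon>" if "e \<in> G" for e
    using Yc_close[OF w ok that] unfolding c_def \<epsilon>_def p_def .
  define a where "a = (Q + 2 - 3 * c) / ff (m - 3)"
  have "(\<Sum>T\<in>triangles G. (Wf (remove_triangle G T) - EW G)^2) \<le> (\<Sum>T\<in>triangles G. (Wf (remove_triangle G T) - a)^2)"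
    unfolding EW_def by (rule avg_sq_le[OF fT ne])
  also have "\<dots> \<le> (\<Sum>T\<in>triangles G. 9 * \<epsilon>^2 / (ff (m - 3))^2)"
  proof (rule sum_mono)
    fix T assume T: "T \<in> triangles G"
    have "S T - 3 * c = (\<Sum>e\<in>edges3 T. (real (Yc G e) - c))"
      unfolding S_def using card_edges3[OF T] by (simp add: sum_subtractf)
    also have "\<bar>\<dots>\<bar> \<le> (\<Sum>e\<in>edges3 T. \<bar>real (Yc G e) - c\<bar>)" by (rule sum_abs)
    also have "\<dots> \<le> (\<Sum>e\<in>edges3 T. \<epsilon>)" using close edges3_sub[OF T] by (intro sum_mono) auto
    also have "\<dots> = 3 * \<epsilon>" using card_edges3[OF T] by simp
    finally have b: "\<bar>S T - 3 * c\<bar> \<le> 3 * \<epsilon>" .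
    have "Wf (remove_triangle G T) - a = (3 * c - S T) / ff (m - 3)"
      unfolding Wr[OF T] a_def by (simp add: diff_divide_distrib[symmetric])
    then have "(Wf (remove_triangle G T) - a)^2 = (S T - 3 * c)^2 / (ff (m - 3))^2"
      by (simp add: power_divide power2_commute)
    also have "\<dots> \<le> (3 * \<epsilon>)^2 / (ff (m - 3))^2"
    proof (rule divide_right_mono)
      have "\<bar>S T - 3 * c\<bar>^2 \<le> (3 * \<epsilon>)^2" using b by (rule power_mono) simp
      then show "(S T - 3 * c)^2 \<le> (3 * \<epsilon>)^2" by simp
    qed simp
    finally show "(Wf (remove_triangle G T) - a)^2 \<le> 9 * \<epsilon>^2 / (ff (m - 3))^2"
      by (simp add: power_mult_distrib)
  qed
  also have "\<dots> = Q * (9 * \<epsilon>^2 / (ff (m - 3))^2)" using Q_def by simp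
  finally show ?thesis unfolding Q_def m_def \<epsilon>_def p_def .
qed


definition xi :: "nat \<Rightarrow> real \<Rightarrow> nat set set \<Rightarrow> nat set set \<Rightarrow> real" where
  "xi n \<alpha> G G' = (if goodG n \<alpha> G then Wf G' - EW G else 0)"

definition Mart :: "nat \<Rightarrow> real \<Rightarrow> nat set set list \<Rightarrow> real" where
  "Mart n \<alpha> gs = (\<Sum>j < length gs - 1. xi n \<alpha> (gs ! j) (gs ! Suc j))"

definition Bad :: "nat \<Rightarrow> real \<Rightarrow> nat set set list \<Rightarrow> bool" where
  "Bad n \<alpha> gs \<longleftrightarrow> (\<exists>j < length gs. thr n \<le> pc n (gs ! j) \<and>
      cc n \<alpha> (pc n (gs ! j)) \<le> \<bar>Mart n \<alpha> (take (Suc j) gs)\<bar>)"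

definition Cg :: "nat \<Rightarrow> real \<Rightarrow> nat set set list \<Rightarrow> real" where
  "Cg n \<alpha> gs = cc n \<alpha> (max (pc n (last gs)) (thr n))"

definition Psi :: "nat \<Rightarrow> real \<Rightarrow> nat set set list \<Rightarrow> real" where
  "Psi n \<alpha> gs = (if Bad n \<alpha> gs then 1 else (Mart n \<alpha> gs)^2 / (Cg n \<alpha> gs)^2)"

lemma Psi_nonneg: "0 \<le> Psi n \<alpha> gs"
  unfolding Psi_def by simp

lemma Mart_snoc: assumes "gs \<noteq> []"
  shows "Mart n \<alpha> (gs @ [g]) = Mart n \<alpha> gs + xi n \<alpha> (last gs) g"
proof -
  obtain k where k: "length gs = Suc k" using assms by (cases gs) auto
  have "Mart n \<alpha> (gs @ [g]) = (\<Sum>j < Suc k. xi n \<alpha> ((gs @ [g]) ! j) ((gs @ [g]) ! Suc j))"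
    unfolding Mart_def using k by simp
  also have "\<dots> = (\<Sum>j < k. xi n \<alpha> ((gs @ [g]) ! j) ((gs @ [g]) ! Suc j)) + xi n \<alpha> ((gs @ [g]) ! k) ((gs @ [g]) ! Suc k)"
    by simp
  also have "(\<Sum>j < k. xi n \<alpha> ((gs @ [g]) ! j) ((gs @ [g]) ! Suc j)) = (\<Sum>j < k. xi n \<alpha> (gs ! j) (gs ! Suc j))"
    using k by (intro sum.cong) (auto simp: nth_append)
  also have "(gs @ [g]) ! k = last gs" using k assms by (simp add: nth_append last_conv_nth)
  also have "(gs @ [g]) ! Suc k = g" using k by (simp add: nth_append)
  finally show ?thesis unfolding Mart_def using k by simp
qed

lemma Bad_snoc: "Bad n \<alpha> (gs @ [g]) \<longleftrightarrow> Bad n \<alpha> gs \<or>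
   (thr n \<le> pc n g \<and> cc n \<alpha> (pc n g) \<le> \<bar>Mart n \<alpha> (gs @ [g])\<bar>)"
proof -
  have "(\<exists>j < length (gs @ [g]). thr n \<le> pc n ((gs @ [g]) ! j) \<and>
      cc n \<alpha> (pc n ((gs @ [g]) ! j)) \<le> \<bar>Mart n \<alpha> (take (Suc j) (gs @ [g]))\<bar>) \<longleftrightarrow>
    (\<exists>j < length gs. thr n \<le> pc n ((gs @ [g]) ! j) \<and>
      cc n \<alpha> (pc n ((gs @ [g]) ! j)) \<le> \<bar>Mart n \<alpha> (take (Suc j) (gs @ [g]))\<bar>) \<or>
    (thr n \<le> pc n ((gs @ [g]) ! length gs) \<and>
      cc n \<alpha> (pc n ((gs @ [g]) ! length gs)) \<le> \<bar>Mart n \<alpha> (take (Suc (length gs)) (gs @ [g]))\<bar>)"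
    by (auto simp: less_Suc_eq)
  also have "(\<exists>j < length gs. thr n \<le> pc n ((gs @ [g]) ! j) \<and>
      cc n \<alpha> (pc n ((gs @ [g]) ! j)) \<le> \<bar>Mart n \<alpha> (take (Suc j) (gs @ [g]))\<bar>) \<longleftrightarrow> Bad n \<alpha> gs"
    unfolding Bad_def by (intro ex_cong1) (auto simp: nth_append)
  finally show ?thesis unfolding Bad_def[of n \<alpha> "gs @ [g]"] by simp
qed

lemma pc_remove: assumes "wfg n G" "T \<in> triangles G"
  shows "pc n (remove_triangle G T) = pc n G - 6 / (real n)^2"
proof -
  have "real (card (remove_triangle G T)) = real (card G) - 3"
    using step_facts(3)[OF assms(1) _ assms(2)] assms(2) by auto
  then show ?thesis unfolding pc_def by (simp add: diff_divide_distrib[symmetric] algebra_simps)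
qed

lemma sum_xi_zero: assumes w: "wfg n G" and ne: "triangles G \<noteq> {}"
  shows "(\<Sum>T\<in>triangles G. xi n \<alpha> G (remove_triangle G T)) = 0"
proof (cases "goodG n \<alpha> G")
  case True
  have Q: "0 < real (card (triangles G))" using step_facts(1)[OF w ne] .
  have "(\<Sum>T\<in>triangles G. xi n \<alpha> G (remove_triangle G T)) =
        (\<Sum>T\<in>triangles G. Wf (remove_triangle G T)) - real (card (triangles G)) * EW G"
    using True by (simp add: xi_def sum_subtractf)
  also have "\<dots> = 0" unfolding EW_def using Q by simp
  finally show ?thesis .
qed (simp add: xi_def)

lemma sum_xi_sq: assumes big: "bign n \<alpha>" and al: "\<alpha> > 0" and w: "wfg n G" and ne: "triangles G \<noteq> {}"
  shows "(\<Sum>T\<in>triangles G. (xi n \<alpha> G (remove_triangle G T))^2)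
     \<le> real (card (triangles G)) * ((144 / (\<alpha>^2 * (real n)^3)) * (cc n \<alpha> (max (pc n G) (thr n)))^2)"
proof (cases "goodG n \<alpha> G")
  case True
  have n0: "0 < real n" using bign_facts[OF big] by simp
  have th: "thr n \<le> pc n G - 6 / (real n)^2" using True by (simp add: goodG_def)
  have thp: "thr n \<le> pc n G" using pc_ge_thr[OF th n0] .
  have p1: "pc n G \<le> 1" using pc_le1[OF w] n0 by simp
  have mx: "max (pc n G) (thr n) = pc n G" using thp by simp
  have "(\<Sum>T\<in>triangles G. (xi n \<alpha> G (remove_triangle G T))^2) =
      (\<Sum>T\<in>triangles G. (Wf (remove_triangle G T) - EW G)^2)" using True by (simp add: xi_def)
  also have "\<dots> \<le> real (card (triangles G)) * (9 * (eps n \<alpha> (pc n G))^2 / (ff (real (card G) - 3))^2)"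
    by (rule var_bound[OF big al w True])
  also have "\<dots> \<le> real (card (triangles G)) * ((144 / (\<alpha>^2 * (real n)^3)) * (cc n \<alpha> (pc n G))^2)"
  proof (rule mult_left_mono)
    have e: "real (card G) = ((real n)^2 * pc n G - real n) / 2" using m_pc n0 by simp
    show "9 * (eps n \<alpha> (pc n G))^2 / (ff (real (card G) - 3))^2 \<le> (144 / (\<alpha>^2 * (real n)^3)) * (cc n \<alpha> (pc n G))^2"
      unfolding e eps_def by (rule var_ratio[OF big al th p1])
  qed simp
  finally show ?thesis unfolding mx .
qed (simp add: xi_def)

lemma step_ineq: assumes big: "bign n \<alpha>" and al: "\<alpha> > 0" and gs: "gs \<noteq> []"
  and w: "wfg n (last gs)" and ne: "triangles (last gs) \<noteq> {}"
  shows "(\<Sum>T\<in>triangles (last gs). Psi n \<alpha> (gs @ [remove_triangle (last gs) T])) / real (card (triangles (last gs)))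
     \<le> Psi n \<alpha> gs + 144 / (\<alpha>^2 * (real n)^3)"
proof -
  define G where "G = last gs"
  define Q where "Q = real (card (triangles G))"
  define \<delta> where "\<delta> = 144 / (\<alpha>^2 * (real n)^3)"
  have n0: "0 < real n" using bign_facts[OF big] by simp
  have d0: "0 \<le> \<delta>" unfolding \<delta>_def by simp
  have wG: "wfg n G" using w G_def by simp
  have neG: "triangles G \<noteq> {}" using ne G_def by simp
  have Q0: "0 < Q" using step_facts(1)[OF wG neG] Q_def by simp
  have fT: "finite (triangles G)" using finite_triangles[OF wG] .
  show ?thesis
  proof (cases "Bad n \<alpha> gs")
    case True
    have "\<forall>T\<in>triangles G. Psi n \<alpha> (gs @ [remove_triangle G T]) = 1"
      using True by (simp add: Psi_def Bad_snoc)
    then have "(\<Sum>T\<in>triangles G. Psi n \<alpha> (gs @ [remove_triangle G T])) = Q" using Q_def by simp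
    then show ?thesis using Q0 True d0 unfolding G_def[symmetric] Q_def[symmetric] \<delta>_def[symmetric]
      by (simp add: Psi_def)
  next
    case False
    define M where "M = Mart n \<alpha> gs"
    define C where "C = Cg n \<alpha> gs"
    have p1: "pc n G \<le> 1" using pc_le1[OF wG] n0 by simp
    have t1: "thr n \<le> 1" using bign_thr1[OF big] .
    have C0: "0 < C" unfolding C_def Cg_def G_def[symmetric] using p1 t1
      by (intro cc_pos[OF big al]) auto
    define x where "x T = xi n \<alpha> G (remove_triangle G T)" for T
    have each: "Psi n \<alpha> (gs @ [remove_triangle G T]) \<le> (M + x T)^2 / C^2" if T: "T \<in> triangles G" for T
    proof -
      define g where "g = remove_triangle G T"
      have wg: "wfg n g" using wfg_remove[OF wG] g_def by simp
      have pg: "pc n g = pc n G - 6 / (real n)^2" using pc_remove[OF wG T] g_def by simp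
      have pg1: "pc n g \<le> 1" using pc_le1[OF wg] n0 by simp
      have Ma: "Mart n \<alpha> (gs @ [g]) = M + x T"
        using Mart_snoc[OF gs] unfolding M_def x_def g_def G_def by simp
      have Cle: "C \<le> Cg n \<alpha> (gs @ [g])"
      proof -
        have "0 < 6 / (real n)^2" using n0 by simp
        then have "pc n g \<le> pc n G" using pg by linarith
        then have "max (pc n g) (thr n) \<le> max (pc n G) (thr n)" by (simp add: max_def)
        then show ?thesis unfolding C_def Cg_def G_def[symmetric] using p1 t1
          by (intro cc_antimono[OF big al]) auto
      qed
      have sq: "C^2 \<le> (Cg n \<alpha> (gs @ [g]))^2" using Cle C0 by (intro power_mono) auto
      show ?thesis
      proof (cases "Bad n \<alpha> (gs @ [g])")
        case True
        then have b: "thr n \<le> pc n g" "cc n \<alpha> (pc n g) \<le> \<bar>M + x T\<bar>"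
          using False Bad_snoc[of n \<alpha> gs g] Ma by auto
        have "Cg n \<alpha> (gs @ [g]) = cc n \<alpha> (pc n g)" unfolding Cg_def using b by simp
        then have "C \<le> \<bar>M + x T\<bar>" using Cle b by simp
        then have "C^2 \<le> \<bar>M + x T\<bar>^2" using C0 by (intro power_mono) auto
        then have "1 \<le> (M + x T)^2 / C^2" using C0 by simp
        then show ?thesis using True g_def by (simp add: Psi_def)
      next
        case nb: False
        have "(M + x T)^2 / (Cg n \<alpha> (gs @ [g]))^2 \<le> (M + x T)^2 / C^2"
        proof (rule divide_left_mono[OF sq])
          have "0 < Cg n \<alpha> (gs @ [g])" using Cle C0 by simp
          then show "0 < (Cg n \<alpha> (gs @ [g]))^2 * C^2" using C0 by simp
        qed simp
        then show ?thesis using nb Ma g_def by (simp add: Psi_def)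
      qed
    qed
    have "(\<Sum>T\<in>triangles G. Psi n \<alpha> (gs @ [remove_triangle G T])) \<le> (\<Sum>T\<in>triangles G. (M + x T)^2 / C^2)"
      using each by (rule sum_mono)
    also have "\<dots> = (\<Sum>T\<in>triangles G. M^2 + 2 * M * x T + (x T)^2) / C^2"
      by (simp add: sum_divide_distrib power2_eq_square algebra_simps)
    also have "(\<Sum>T\<in>triangles G. M^2 + 2 * M * x T + (x T)^2) = Q * M^2 + 2 * M * (\<Sum>T\<in>triangles G. x T) + (\<Sum>T\<in>triangles G. (x T)^2)"
      by (simp add: sum.distrib sum_distrib_left Q_def)
    also have "(\<Sum>T\<in>triangles G. x T) = 0" unfolding x_def by (rule sum_xi_zero[OF wG neG])
    finally have A: "(\<Sum>T\<in>triangles G. Psi n \<alpha> (gs @ [remove_triangle G T])) \<le> (Q * M^2 + (\<Sum>T\<in>triangles G. (x T)^2)) / C^2"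
      by simp
    have B: "(\<Sum>T\<in>triangles G. (x T)^2) \<le> Q * (\<delta> * C^2)"
      using sum_xi_sq[OF big al wG neG] unfolding x_def Q_def \<delta>_def C_def Cg_def G_def .
    have "(Q * M^2 + (\<Sum>T\<in>triangles G. (x T)^2)) / C^2 \<le> (Q * M^2 + Q * (\<delta> * C^2)) / C^2"
      using B C0 by (intro divide_right_mono) auto
    also have "\<dots> = Q * (M^2 / C^2 + \<delta>)" using C0 by (simp add: field_simps)
    finally have A2: "(\<Sum>T\<in>triangles G. Psi n \<alpha> (gs @ [remove_triangle G T])) \<le> Q * (M^2 / C^2 + \<delta>)"
      using A by linarith
    have "(\<Sum>T\<in>triangles G. Psi n \<alpha> (gs @ [remove_triangle G T])) / Q \<le> M^2 / C^2 + \<delta>"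
      using A2 Q0 by (simp add: pos_divide_le_eq mult.commute)
    then show ?thesis using False unfolding Psi_def M_def C_def G_def Q_def \<delta>_def by simp
  qed
qed

definition valid :: "nat \<Rightarrow> nat set set list \<Rightarrow> bool" where
  "valid n gs \<longleftrightarrow> gs \<noteq> [] \<and> gs ! 0 = complete_graph n \<and>
     (\<forall>j. Suc j < length gs \<longrightarrow> (\<exists>T\<in>triangles (gs ! j). gs ! Suc j = remove_triangle (gs ! j) T))"

lemma wfg_complete: "wfg n (complete_graph n)" by (simp add: wfg_def)

lemma valid_wfg: "valid n gs \<Longrightarrow> j < length gs \<Longrightarrow> wfg n (gs ! j)"
proof (induction j)
  case 0 then show ?case by (simp add: valid_def wfg_complete)
next
  case (Suc j)
  then obtain T where "gs ! Suc j = remove_triangle (gs ! j) T" by (auto simp: valid_def)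
  then show ?case using Suc wfg_remove by simp
qed

lemma valid_card: "valid n gs \<Longrightarrow> j < length gs \<Longrightarrow> card (gs ! j) + 3 * j = card (complete_graph n)"
proof (induction j)
  case 0 then show ?case by (simp add: valid_def)
next
  case (Suc j)
  then obtain T where T: "T \<in> triangles (gs ! j)" "gs ! Suc j = remove_triangle (gs ! j) T" by (auto simp: valid_def)
  have w: "wfg n (gs ! j)" using valid_wfg Suc by simp
  have "3 \<le> card (gs ! j)"
  proof -
    have "card (edges3 T) \<le> card (gs ! j)" using edges3_sub[OF T(1)] wfg_finite[OF w] by (rule card_mono[rotated])
    then show ?thesis using card_edges3[OF T(1)] by simp
  qed
  then show ?case using Suc card_remove[OF w T(1)] T(2) by simp
qed

lemma valid_snoc: assumes "valid n gs" "T \<in> triangles (last gs)"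
  shows "valid n (gs @ [remove_triangle (last gs) T])"
proof -
  have v: "gs \<noteq> []" "gs ! 0 = complete_graph n"
    "\<And>j. Suc j < length gs \<Longrightarrow> (\<exists>T\<in>triangles (gs ! j). gs ! Suc j = remove_triangle (gs ! j) T)"
    using assms(1) by (auto simp: valid_def)
  define hs where "hs = gs @ [remove_triangle (last gs) T]"
  have "\<exists>T'\<in>triangles (hs ! j). hs ! Suc j = remove_triangle (hs ! j) T'" if j: "Suc j < length hs" for j
  proof (cases "Suc j < length gs")
    case True then show ?thesis using v(3)[OF True] unfolding hs_def by (simp add: nth_append)
  next
    case False
    then have jj: "j = length gs - 1" "j < length gs" using j hs_def by auto
    then have "hs ! j = last gs" using v(1) unfolding hs_def by (simp add: nth_append last_conv_nth)
    moreover have "hs ! Suc j = remove_triangle (last gs) T" using jj v(1) unfolding hs_def by (simp add: nth_append)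
    ultimately show ?thesis using assms(2) by auto
  qed
  moreover have "hs \<noteq> []" "hs ! 0 = complete_graph n" using v unfolding hs_def by (auto simp: nth_append)
  ultimately show ?thesis unfolding valid_def hs_def by blast
qed

lemma valid_last_wfg: "valid n gs \<Longrightarrow> wfg n (last gs)"
  using valid_wfg[of n gs "length gs - 1"] by (simp add: valid_def last_conv_nth)

lemma traj_valid: "gs \<in> set_pmf (traj n k) \<Longrightarrow> valid n gs"
proof (induction k arbitrary: gs)
  case 0 then show ?case by (simp add: valid_def)
next
  case (Suc k)
  then obtain hs where hs: "hs \<in> set_pmf (traj n k)"
    and gs: "gs \<in> set_pmf (if triangles (last hs) = {} then return_pmf hs
      else map_pmf (\<lambda>g. hs @ [g]) (removal_step (last hs)))" by auto
  have v: "valid n hs" using Suc.IH[OF hs] .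
  show ?case
  proof (cases "triangles (last hs) = {}")
    case True then show ?thesis using gs v by simp
  next
    case False
    have fin: "finite (triangles (last hs))" using finite_triangles[OF valid_last_wfg[OF v]] .
    then obtain T where "T \<in> triangles (last hs)" "gs = hs @ [remove_triangle (last hs) T]"
      using gs False by (auto simp: removal_step_def)
    then show ?thesis using valid_snoc[OF v] by simp
  qed
qed

lemma Psi_init: assumes big: "bign n \<alpha>" and al: "\<alpha> > 0"
  shows "Psi n \<alpha> [complete_graph n] = 0"
proof -
  have n0: "0 < real n" using bign_facts[OF big] by simp
  have M: "Mart n \<alpha> [complete_graph n] = 0" by (simp add: Mart_def)
  have "\<not> Bad n \<alpha> [complete_graph n]"
  proof
    assume "Bad n \<alpha> [complete_graph n]"
    then have t: "thr n \<le> pc n (complete_graph n)" and c: "cc n \<alpha> (pc n (complete_graph n)) \<le> 0"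
      by (auto simp: Bad_def M)
    have "pc n (complete_graph n) \<le> 1" using pc_le1[OF wfg_complete] n0 by simp
    then show False using cc_pos[OF big al t] c by simp
  qed
  then show ?thesis by (simp add: Psi_def M)
qed


lemma inner_step: assumes big: "bign n \<alpha>" and al: "\<alpha> > 0" and v: "valid n gs"
  shows "(\<integral>\<^sup>+y. ennreal (Psi n \<alpha> y) \<partial>measure_pmf (if triangles (last gs) = {} then return_pmf gs
      else map_pmf (\<lambda>g. gs @ [g]) (removal_step (last gs)))) \<le> ennreal (Psi n \<alpha> gs) + ennreal (144 / (\<alpha>^2 * (real n)^3))"
proof (cases "triangles (last gs) = {}")
  case True then show ?thesis by simp
next
  case False
  define \<delta> where "\<delta> = 144 / (\<alpha>^2 * (real n)^3)"
  have d0: "0 \<le> \<delta>" unfolding \<delta>_def by simp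
  have w: "wfg n (last gs)" using valid_last_wfg[OF v] .
  have fin: "finite (triangles (last gs))" using finite_triangles[OF w] .
  have ne: "gs \<noteq> []" using v by (simp add: valid_def)
  have cpos: "0 < real (card (triangles (last gs)))" using fin False by (simp add: card_gt_0_iff)
  have "(\<integral>\<^sup>+y. ennreal (Psi n \<alpha> y) \<partial>measure_pmf (map_pmf (\<lambda>g. gs @ [g]) (removal_step (last gs))))
     = (\<integral>\<^sup>+T. ennreal (Psi n \<alpha> (gs @ [remove_triangle (last gs) T])) \<partial>measure_pmf (pmf_of_set (triangles (last gs))))"
    unfolding removal_step_def nn_integral_map_pmf by (rule refl)
  also have "\<dots> = (\<Sum>T\<in>triangles (last gs). ennreal (Psi n \<alpha> (gs @ [remove_triangle (last gs) T]))) / of_nat (card (triangles (last gs)))"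
    by (rule nn_integral_pmf_of_set[OF False fin])
  also have "\<dots> = ennreal ((\<Sum>T\<in>triangles (last gs). Psi n \<alpha> (gs @ [remove_triangle (last gs) T])) / real (card (triangles (last gs))))"
  proof -
    have "(\<Sum>T\<in>triangles (last gs). ennreal (Psi n \<alpha> (gs @ [remove_triangle (last gs) T]))) =
       ennreal (\<Sum>T\<in>triangles (last gs). Psi n \<alpha> (gs @ [remove_triangle (last gs) T]))"
      by (rule sum_ennreal) (rule Psi_nonneg)
    moreover have "(of_nat (card (triangles (last gs))) :: ennreal) = ennreal (real (card (triangles (last gs))))"
      by (rule ennreal_of_nat_eq_real_of_nat)
    ultimately show ?thesis using cpos by (simp add: divide_ennreal sum_nonneg Psi_nonneg)
  qed
  also have "\<dots> \<le> ennreal (Psi n \<alpha> gs + \<delta>)"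
    using step_ineq[OF big al ne w False] unfolding \<delta>_def by (rule ennreal_leI)
  also have "\<dots> = ennreal (Psi n \<alpha> gs) + ennreal \<delta>" using d0 Psi_nonneg by (simp add: ennreal_plus)
  finally show ?thesis using False unfolding \<delta>_def by simp
qed

lemma int_bound: assumes big: "bign n \<alpha>" and al: "\<alpha> > 0"
  shows "(\<integral>\<^sup>+gs. ennreal (Psi n \<alpha> gs) \<partial>measure_pmf (traj n k)) \<le> ennreal (real k * (144 / (\<alpha>^2 * (real n)^3)))"
proof (induction k)
  case 0
  have "(\<integral>\<^sup>+gs. ennreal (Psi n \<alpha> gs) \<partial>measure_pmf (traj n 0)) = ennreal (Psi n \<alpha> [complete_graph n])"
    unfolding traj.simps(1) by (rule nn_integral_return_pmf) simp
  then show ?case using Psi_init[OF big al] by simp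
next
  case (Suc k)
  define \<delta> where "\<delta> = 144 / (\<alpha>^2 * (real n)^3)"
  have d0: "0 \<le> \<delta>" unfolding \<delta>_def by simp
  have "(\<integral>\<^sup>+gs. ennreal (Psi n \<alpha> gs) \<partial>measure_pmf (traj n (Suc k)))
      = (\<integral>\<^sup>+gs. (\<integral>\<^sup>+y. ennreal (Psi n \<alpha> y) \<partial>measure_pmf (if triangles (last gs) = {} then return_pmf gs
      else map_pmf (\<lambda>g. gs @ [g]) (removal_step (last gs)))) \<partial>measure_pmf (traj n k))"
    unfolding traj.simps(2) nn_integral_bind_pmf by (rule refl)
  also have "\<dots> \<le> (\<integral>\<^sup>+gs. ennreal (Psi n \<alpha> gs) + ennreal \<delta> \<partial>measure_pmf (traj n k))"
  proof (rule nn_integral_mono_AE)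
    show "AE gs in measure_pmf (traj n k). (\<integral>\<^sup>+y. ennreal (Psi n \<alpha> y) \<partial>measure_pmf (if triangles (last gs) = {} then return_pmf gs
      else map_pmf (\<lambda>g. gs @ [g]) (removal_step (last gs)))) \<le> ennreal (Psi n \<alpha> gs) + ennreal \<delta>"
      unfolding AE_measure_pmf_iff \<delta>_def using inner_step[OF big al traj_valid] by blast
  qed
  also have "\<dots> = (\<integral>\<^sup>+gs. ennreal (Psi n \<alpha> gs) \<partial>measure_pmf (traj n k)) + ennreal \<delta>"
  proof -
    have "(\<integral>\<^sup>+gs. ennreal (Psi n \<alpha> gs) + ennreal \<delta> \<partial>measure_pmf (traj n k)) =
      (\<integral>\<^sup>+gs. ennreal (Psi n \<alpha> gs) \<partial>measure_pmf (traj n k)) + (\<integral>\<^sup>+gs. ennreal \<delta> \<partial>measure_pmf (traj n k))"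
      by (rule nn_integral_add) (auto simp: measurable_pmf_measure1)
    moreover have "(\<integral>\<^sup>+gs. ennreal \<delta> \<partial>measure_pmf (traj n k)) = ennreal \<delta>"
      using measure_pmf.emeasure_space_1 by (simp add: nn_integral_const)
    ultimately show ?thesis by simp
  qed
  also have "\<dots> \<le> ennreal (real k * \<delta>) + ennreal \<delta>" using Suc.IH unfolding \<delta>_def by (intro add_right_mono)
  also have "\<dots> = ennreal (real k * \<delta> + \<delta>)" using d0 by (intro ennreal_plus[symmetric]) auto
  also have "real k * \<delta> + \<delta> = real (Suc k) * \<delta>" by (simp add: algebra_simps)
  finally show ?case unfolding \<delta>_def .
qed


lemma choose2_real: "real (n choose 2) * 2 = real n * (real n - 1)"
proof (induction n)
  case 0 then show ?case by simp
next
  case (Suc n)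
  have "Suc n choose 2 = (n choose 1) + (n choose 2)"
    by (metis Suc_1 binomial_Suc_Suc)
  then show ?case using Suc by (simp add: algebra_simps)
qed

lemma choose3_real: "real (n choose 3) * 6 = real n * (real n - 1) * (real n - 2)"
proof (induction n)
  case 0 then show ?case by simp
next
  case (Suc n)
  have "Suc n choose Suc 2 = (n choose 2) + (n choose Suc 2)" by (rule binomial_Suc_Suc)
  then have "Suc n choose 3 = (n choose 2) + (n choose 3)" by (simp add: numeral_3_eq_3)
  then have "real (Suc n choose 3) * 6 = real (n choose 2) * 2 * 3 + real (n choose 3) * 6" by simp
  then show ?case using Suc choose2_real[of n] by (simp add: algebra_simps)
qed

lemma card_complete: "card (complete_graph n) = n choose 2"
proof -
  have "card {e. e \<subseteq> {..<n} \<and> card e = 2} = n choose 2"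
    using n_subsets[of "{..<n}" 2] by (simp add: conj_commute)
  then show ?thesis by (simp add: complete_graph_alt)
qed

lemma tri_complete: "triangles (complete_graph n) = {T. T \<subseteq> {..<n} \<and> card T = 3}"
proof
  show "triangles (complete_graph n) \<subseteq> {T. T \<subseteq> {..<n} \<and> card T = 3}"
    by (rule triangles_sub[OF wfg_complete])
  show "{T. T \<subseteq> {..<n} \<and> card T = 3} \<subseteq> triangles (complete_graph n)"
    by (auto simp: triangles_def complete_graph_def)
qed

lemma card_tri_complete: "card (triangles (complete_graph n)) = n choose 3"
  unfolding tri_complete using n_subsets[of "{..<n}" 3] by (simp add: conj_commute)

lemma pc_pp: assumes v: "valid n gs" and j: "j < length gs" and n: "0 < n"
  shows "pc n (gs ! j) = pp n j"
proof -
  have c: "card (gs ! j) + 3 * j = n choose 2" using valid_card[OF v j] card_complete by simp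
  then have "real (card (gs ! j)) = real (n choose 2) - 3 * real j"
    by (metis add_diff_cancel_right' of_nat_add of_nat_mult of_nat_numeral add_diff_cancel_left')
  then have "2 * real (card (gs ! j)) + real n = (real n)^2 - 6 * real j"
    using choose2_real[of n] by (simp add: algebra_simps power2_eq_square)
  then show ?thesis unfolding pc_def pp_def using n by (simp add: field_simps)
qed

lemma pp_mono: "j \<le> i \<Longrightarrow> pp n i \<le> pp n j"
  unfolding pp_def by (simp add: divide_right_mono)

lemma pp_Suc: "pp n (Suc j) = pp n j - 6 / (real n)^2"
  unfolding pp_def by (simp add: algebra_simps add_divide_distrib)

lemma Mart_take: assumes "i < length gs"
  shows "Mart n \<alpha> (take (Suc i) gs) = (\<Sum>j<i. xi n \<alpha> (gs ! j) (gs ! Suc j))"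
  unfolding Mart_def using assms by (intro sum.cong) (auto simp: min_def)

lemma good_before: assumes big: "bign n \<alpha>" and v: "valid n gs" and i: "i < length gs" and j: "j < i"
  and hp: "thr n \<le> pp n i"
  and hc: "\<forall>j<i. \<forall>u<n. \<forall>v<n. u \<noteq> v \<longrightarrow>
            \<bar>real (codeg (gs ! j) u v) - real n * (pp n j)^2\<bar>
              \<le> \<alpha> * sqrt (real n) * pp n j * Phi (pp n j) n"
  shows "goodG n \<alpha> (gs ! j)"
proof -
  have n: "0 < n" using bign_facts[OF big] by simp
  have jl: "j < length gs" using i j by simp
  have "Suc j < length gs" using i j by simp
  then obtain T where "T \<in> triangles (gs ! j)" using v by (auto simp: valid_def)
  then have ne: "triangles (gs ! j) \<noteq> {}" by auto
  have pj: "pc n (gs ! j) = pp n j" using pc_pp[OF v jl n] .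
  have "thr n \<le> pp n (Suc j)" using hp pp_mono[of "Suc j" i n] j by simp
  then have th: "thr n \<le> pc n (gs ! j) - 6 / (real n)^2" using pj pp_Suc by simp
  have ok: "codeg_ok n \<alpha> (gs ! j)" unfolding codeg_ok_def eps_def pj using hc j by simp
  show ?thesis unfolding goodG_def using ne th ok by simp
qed

lemma main_det: assumes big: "bign n \<alpha>" and al: "\<alpha> > 0" and v: "valid n gs" and i: "i < length gs"
  and hp: "thr n \<le> pp n i"
  and hc: "\<forall>j<i. \<forall>u<n. \<forall>v<n. u \<noteq> v \<longrightarrow>
            \<bar>real (codeg (gs ! j) u v) - real n * (pp n j)^2\<bar>
              \<le> \<alpha> * sqrt (real n) * pp n j * Phi (pp n j) n"
  and nb: "\<not> Bad n \<alpha> gs"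
  shows "\<bar>real (num_triangles (gs ! i)) - (real n)^3 * (pp n i)^3 / 6\<bar>
              \<le> \<alpha>^2 * (real n)^2 * pp n i * (Phi (pp n i) n)^2"
proof -
  note f = bign_facts[OF big]
  have n0: "0 < real n" and nn: "0 < n" using f by auto
  define p where "p = pp n i"
  have pci: "pc n (gs ! i) = p" using pc_pp[OF v i nn] p_def by simp
  have wi: "wfg n (gs ! i)" using valid_wfg[OF v i] .
  have p1: "p \<le> 1" using pc_le1[OF wi nn] pci by simp
  have thp: "thr n \<le> p" using hp p_def by simp
  have p0: "0 < p" using thr_pos[OF big] thp by simp
  define N where "N = real (n choose 2)"
  define m where "m = real (card (gs ! i))"
  have cardj: "real (card (gs ! j)) = N - 3 * real j" if "j < length gs" for j
  proof -
    have "card (gs ! j) + 3 * j = n choose 2" using valid_card[OF v that] card_complete by simp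
    then have "real (card (gs ! j)) + 3 * real j = N" unfolding N_def by (metis of_nat_add of_nat_mult of_nat_numeral)
    then show ?thesis by simp
  qed
  have mN: "m = N - 3 * real i" using cardj[OF i] m_def by simp
  have meq: "m = ((real n)^2 * p - real n) / 2" using m_pc[OF nn, of "gs ! i"] pci m_def by simp
  have m30: "30 \<le> m" using m_ge[OF big thp] meq by simp
  have Fm: "0 < ff m" using ff_pos m30 by simp
  define Mi where "Mi = Mart n \<alpha> (take (Suc i) gs)"
  define A where "A = (\<Sum>j<i. EW (gs ! j) - Wf (gs ! j))"
  have good: "goodG n \<alpha> (gs ! j)" if "j < i" for j
    using good_before[OF big v i that hp hc] .
  have Mi_eq: "Mi = (\<Sum>j<i. Wf (gs ! Suc j) - EW (gs ! j))"
    unfolding Mi_def Mart_take[OF i] using good by (intro sum.cong) (auto simp: xi_def)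
  have tel: "(\<Sum>j<i. Wf (gs ! Suc j) - Wf (gs ! j)) = Wf (gs ! i) - Wf (gs ! 0)"
    by (rule sum_lessThan_telescope)
  have "Mi + A = (\<Sum>j<i. Wf (gs ! Suc j) - Wf (gs ! j))"
    unfolding Mi_eq A_def by (simp add: sum.distrib[symmetric])
  then have Wi: "Wf (gs ! i) = Wf (gs ! 0) + Mi + A" using tel by simp
  have Qi: "real (num_triangles (gs ! i)) = ff m * Wf (gs ! i)"
    unfolding Wf_def m_def using Fm m_def by simp
  define D where "D = 2 + 4 * \<alpha>^2 * (Phi p n)^2"
  have Ab: "\<bar>A\<bar> \<le> D * (\<Sum>j<i. 1 / ff (N - 3 * (real j + 1)))"
  proof -
    have "\<bar>A\<bar> \<le> (\<Sum>j<i. \<bar>EW (gs ! j) - Wf (gs ! j)\<bar>)" unfolding A_def by (rule sum_abs)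
    also have "\<dots> \<le> (\<Sum>j<i. D * (1 / ff (N - 3 * (real j + 1))))"
    proof (rule sum_mono)
      fix j assume "j \<in> {..<i}"
      then have ji: "j < i" by simp
      then have jl: "j < length gs" using i by simp
      have wj: "wfg n (gs ! j)" using valid_wfg[OF v jl] .
      have pj: "pc n (gs ! j) = pp n j" using pc_pp[OF v jl nn] .
      have "p \<le> pp n j" unfolding p_def using ji by (intro pp_mono) simp
      then have Ph: "Phi (pp n j) n \<le> Phi p n" using Phi_antimono[OF p0] f by simp
      have Ph0: "0 \<le> Phi (pp n j) n" using Phi_pos[of "pp n j" n] p0 \<open>p \<le> pp n j\<close> f by simp
      have num: "2 + 4 * \<alpha>^2 * (Phi (pp n j) n)^2 \<le> D"
      proof -
        have "(Phi (pp n j) n)^2 \<le> (Phi p n)^2" using power_mono[OF Ph Ph0, of 2] .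
        then have "\<alpha>^2 * (Phi (pp n j) n)^2 \<le> \<alpha>^2 * (Phi p n)^2" by (intro mult_left_mono) auto
        then show ?thesis unfolding D_def by simp
      qed
      have th: "thr n \<le> pc n (gs ! j) - 6 / (real n)^2" using good[OF ji] by (simp add: goodG_def)
      have c3: "real (card (gs ! j)) - 3 = N - 3 * (real j + 1)" using cardj[OF jl] by simp
      have F: "0 < ff (N - 3 * (real j + 1))" using m3_ge[OF big th] c3 ff_pos by simp
      have "\<bar>EW (gs ! j) - Wf (gs ! j)\<bar> \<le> (2 + 4 * \<alpha>^2 * (Phi (pp n j) n)^2) / ff (N - 3 * (real j + 1))"
        using drift_bound[OF big al wj good[OF ji]] pj c3 by simp
      also have "\<dots> \<le> D / ff (N - 3 * (real j + 1))" using num F by (intro divide_right_mono) auto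
      finally show "\<bar>EW (gs ! j) - Wf (gs ! j)\<bar> \<le> D * (1 / ff (N - 3 * (real j + 1)))" by simp
    qed
    also have "\<dots> = D * (\<Sum>j<i. 1 / ff (N - 3 * (real j + 1)))" by (simp add: sum_distrib_left)
    finally show ?thesis .
  qed
  have D0: "0 \<le> D" unfolding D_def by simp
  have FA: "ff m * \<bar>A\<bar> \<le> D * m / 6"
  proof -
    have "ff m * \<bar>A\<bar> \<le> ff m * (D * (\<Sum>j<i. 1 / ff (N - 3 * (real j + 1))))"
      using Ab Fm by (intro mult_left_mono) auto
    also have "\<dots> = D * (ff (N - 3 * real i) * (\<Sum>j<i. 1 / ff (N - 3 * (real j + 1))))" using mN by simp
    also have "\<dots> \<le> D * ((N - 3 * real i) / 6)"
      using tele[of N i] m30 mN D0 by (intro mult_left_mono) auto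
    finally show ?thesis using mN by simp
  qed
  have Mb: "\<bar>Mi\<bar> < cc n \<alpha> p"
  proof -
    have "\<not> (thr n \<le> pc n (gs ! i) \<and> cc n \<alpha> (pc n (gs ! i)) \<le> \<bar>Mart n \<alpha> (take (Suc i) gs)\<bar>)"
      using nb i unfolding Bad_def by blast
    then show ?thesis using pci thp Mi_def by auto
  qed
  have FM: "ff m * \<bar>Mi\<bar> \<le> \<alpha>^2 * (real n)^2 * p * (Phi p n)^2 / 2"
  proof -
    have "ff m * \<bar>Mi\<bar> \<le> ff m * cc n \<alpha> p" using Mb Fm by simp
    also have "\<dots> = \<alpha>^2 * (real n)^2 * p * (Phi p n)^2 / 2"
      unfolding cc_def meq[symmetric] using Fm by simp
    finally show ?thesis .
  qed
  define x where "x = real n * p"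
  have x2: "2 \<le> x" using np_ge(1)[OF big thp] x_def by simp
  have xn: "x \<le> real n" using p1 n0 x_def by (simp add: mult_left_le)
  have mx: "(real n * x - real n) / 2 = m" unfolding x_def meq by (simp add: power2_eq_square mult.assoc)
  have W0: "Wf (gs ! 0) = (real n * (real n - 1) * (real n - 2) / 6) / ff (real n * (real n - 1) / 2)"
  proof -
    have g0: "gs ! 0 = complete_graph n" using v by (simp add: valid_def)
    have a: "real (num_triangles (complete_graph n)) = real n * (real n - 1) * (real n - 2) / 6"
      using choose3_real[of n] by (simp add: num_triangles_def card_tri_complete)
    have b: "real (card (complete_graph n)) = real n * (real n - 1) / 2"
      using choose2_real[of n] by (simp add: card_complete)
    show ?thesis unfolding Wf_def g0 a b ..
  qed
  have E: "\<bar>ff m * Wf (gs ! 0) - x^3 / 6\<bar> \<le> 3/2 * real n * x"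
  proof -
    have "ff m * Wf (gs ! 0) = ff ((real n * x - real n) / 2) * (real n * (real n - 1) * (real n - 2) / 6) / ff (real n * (real n - 1) / 2)"
      unfolding W0 mx by simp
    moreover have "12 \<le> real n" using f by simp
    moreover have "30 \<le> (real n * x - real n) / 2" using m30 mx by simp
    ultimately show ?thesis using E1[of "real n" x] x2 xn by simp
  qed
  have x3: "x^3 = (real n)^3 * p^3" unfolding x_def by (simp add: power_mult_distrib)
  define B where "B = \<alpha>^2 * (real n)^2 * p * (Phi p n)^2"
  define K where "K = (real n)^2 * p"
  define Z where "Z = \<alpha>^2 * (Phi p n)^2"
  have K0: "0 < K" using n0 p0 K_def by simp
  have Z12: "12 \<le> Z"
  proof -
    have "ln (real n) \<le> Phi p n" using Phi_range(1)[OF big thp p1] .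
    then have "(ln (real n))^2 \<le> (Phi p n)^2" using f by (intro power_mono) auto
    then have "\<alpha>^2 * (ln (real n))^2 \<le> \<alpha>^2 * (Phi p n)^2" by (intro mult_left_mono) auto
    then show ?thesis using f Z_def by simp
  qed
  have BZK: "B = Z * K" unfolding B_def Z_def K_def by simp
  have mK: "m \<le> K / 2" using meq K_def n0 by simp
  have nx: "real n * x = K" unfolding x_def K_def by (simp add: power2_eq_square)
  have "real (num_triangles (gs ! i)) - (real n)^3 * p^3 / 6 = (ff m * Wf (gs ! 0) - x^3/6) + ff m * Mi + ff m * A"
    unfolding Qi Wi x3 by (simp only: distrib_left)
  then have tri: "\<bar>real (num_triangles (gs ! i)) - (real n)^3 * p^3 / 6\<bar> \<le> \<bar>ff m * Wf (gs ! 0) - x^3/6\<bar> + \<bar>ff m * Mi\<bar> + \<bar>ff m * A\<bar>"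
    using abs_triangle_ineq[of "(ff m * Wf (gs ! 0) - x^3/6) + ff m * Mi" "ff m * A"]
      abs_triangle_ineq[of "ff m * Wf (gs ! 0) - x^3/6" "ff m * Mi"] by linarith
  have am: "\<bar>ff m * Mi\<bar> = ff m * \<bar>Mi\<bar>" using Fm by (simp add: abs_mult)
  have aA: "\<bar>ff m * A\<bar> = ff m * \<bar>A\<bar>" using Fm by (simp add: abs_mult)
  have a: "\<bar>ff m * Wf (gs ! 0) - x^3/6\<bar> \<le> 3/2 * K" using E nx by (simp add: mult.assoc)
  have b: "ff m * \<bar>Mi\<bar> \<le> Z * K / 2" using FM unfolding Z_def K_def by (simp add: algebra_simps)
  have c: "ff m * \<bar>A\<bar> \<le> D * (K / 2) / 6"
  proof -
    have "D * m \<le> D * (K / 2)" using mK D0 by (intro mult_left_mono)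
    then show ?thesis using FA by simp
  qed
  have fin: "3/2 * K + Z * K / 2 + D * (K / 2) / 6 \<le> B"
  proof -
    have DZ: "D = 2 + 4 * Z" unfolding D_def Z_def by simp
    have "3/2 * K + Z * K / 2 + D * (K / 2) / 6 = K * (3/2 + 1/6 + Z * (5/6))" unfolding DZ by (simp add: field_simps)
    also have "\<dots> \<le> K * Z" using Z12 K0 by (intro mult_left_mono) auto
    finally show ?thesis using BZK by (simp add: mult.commute)
  qed
  have "\<bar>real (num_triangles (gs ! i)) - (real n)^3 * p^3 / 6\<bar> \<le> B"
    using tri unfolding am aA using a b c fin by linarith
  then show ?thesis unfolding B_def p_def .
qed


lemma not_good_Bad: assumes big: "bign n \<alpha>" and al: "\<alpha> > 0" and v: "valid n gs"
  and ng: "\<not> good_event n \<alpha> gs"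
  shows "Bad n \<alpha> gs"
proof (rule ccontr)
  assume nb: "\<not> Bad n \<alpha> gs"
  have "good_event n \<alpha> gs"
    unfolding good_event_def
  proof (intro allI impI)
    fix i assume i: "i < length gs" and h: "real n powr (- 1 / 2) * (ln (real n))\<^sup>2 \<le> pp n i \<and>
         (\<forall>j<i. \<forall>u<n. \<forall>v<n. u \<noteq> v \<longrightarrow>
            \<bar>real (codeg (gs ! j) u v) - real n * (pp n j)^2\<bar>
              \<le> \<alpha> * sqrt (real n) * pp n j * Phi (pp n j) n)"
    have hp: "thr n \<le> pp n i" using h by (simp add: thr_def)
    show "\<bar>real (num_triangles (gs ! i)) - (real n)^3 * (pp n i)^3 / 6\<bar>
              \<le> \<alpha>^2 * (real n)^2 * pp n i * (Phi (pp n i) n)^2"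
      using main_det[OF big al v i hp _ nb] h by blast
  qed
  then show False using ng by simp
qed

lemma prob_bound: assumes big: "bign n \<alpha>" and al: "\<alpha> > 0"
  shows "1 - 144 / (\<alpha>^2 * real n) \<le> measure_pmf.prob (triangle_removal_process n) {gs. good_event n \<alpha> gs}"
proof -
  define M where "M = traj n (n^2)"
  define A where "A = {gs. \<not> good_event n \<alpha> gs}"
  have n0: "0 < real n" using bign_facts[OF big] by simp
  have "emeasure (measure_pmf M) A = (\<integral>\<^sup>+gs. indicator A gs \<partial>measure_pmf M)" by simp
  also have "\<dots> \<le> (\<integral>\<^sup>+gs. ennreal (Psi n \<alpha> gs) \<partial>measure_pmf M)"
  proof (rule nn_integral_mono_AE)
    show "AE gs in measure_pmf M. indicator A gs \<le> ennreal (Psi n \<alpha> gs)"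
      unfolding AE_measure_pmf_iff
    proof
      fix gs assume gs: "gs \<in> set_pmf M"
      show "indicator A gs \<le> ennreal (Psi n \<alpha> gs)"
      proof (cases "gs \<in> A")
        case True
        then have "Bad n \<alpha> gs" using not_good_Bad[OF big al traj_valid[OF gs[unfolded M_def]]] A_def by simp
        then show ?thesis using True by (simp add: Psi_def)
      qed simp
    qed
  qed
  also have "\<dots> \<le> ennreal (real (n^2) * (144 / (\<alpha>^2 * (real n)^3)))"
    unfolding M_def by (rule int_bound[OF big al])
  also have "real (n^2) * (144 / (\<alpha>^2 * (real n)^3)) = 144 / (\<alpha>^2 * real n)"
    using n0 by (simp add: field_simps power2_eq_square power3_eq_cube)
  finally have "ennreal (measure_pmf.prob M A) \<le> ennreal (144 / (\<alpha>^2 * real n))"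
    by (simp add: measure_pmf.emeasure_eq_measure)
  then have pA: "measure_pmf.prob M A \<le> 144 / (\<alpha>^2 * real n)"
    using n0 al by (simp add: ennreal_le_iff)
  have "measure_pmf.prob M {gs. good_event n \<alpha> gs} = measure_pmf.prob M (space (measure_pmf M) - A)"
    unfolding A_def by (simp add: Compl_eq_Diff_UNIV[symmetric] Collect_neg_eq[symmetric])
  also have "\<dots> = 1 - measure_pmf.prob M A" by (rule measure_pmf.prob_compl) simp
  finally show ?thesis using pA unfolding M_def triangle_removal_process_def by simp
qed

lemma eventually_bign: assumes al: "\<alpha> > 0" shows "eventually (\<lambda>n. bign n \<alpha>) sequentially"
proof -
  have e1: "eventually (\<lambda>n::nat. 100 \<le> real n) sequentially" by real_asymp
  have e2: "eventually (\<lambda>n::nat. 1 \<le> ln (real n)) sequentially" by real_asymp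
  have e3: "eventually (\<lambda>n::nat. 4 / \<alpha> \<le> ln (real n)) sequentially" by real_asymp
  have e4: "eventually (\<lambda>n::nat. 4 * \<alpha> * exp 1 \<le> ln (real n)) sequentially" by real_asymp
  have e5: "eventually (\<lambda>n::nat. real n powr (-1/2) * (ln (real n))^2 \<le> 1) sequentially" by real_asymp
  show ?thesis using e1 e2 e3 e4 e5
  proof eventually_elim
    case (elim n)
    have "4 \<le> \<alpha> * ln (real n)" using elim(3) al by (simp add: divide_le_eq mult.commute)
    then have "4^2 \<le> (\<alpha> * ln (real n))^2" by (intro power_mono) auto
    then have "12 \<le> \<alpha>^2 * (ln (real n))^2" by (simp add: power_mult_distrib)
    then show ?case using elim unfolding bign_def thr_def by simp
  qed
qed

theorem theorem2p2:
  fixes \<alpha> :: real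
  assumes "\<alpha> > 0"
  shows "(\<lambda>n. measure_pmf.prob (triangle_removal_process n) {gs. good_event n \<alpha> gs})
           \<longlonglongrightarrow> 1"
proof (rule tendsto_sandwich)
  show "eventually (\<lambda>n. 1 - 144 / (\<alpha>^2 * real n) \<le> measure_pmf.prob (triangle_removal_process n) {gs. good_event n \<alpha> gs}) sequentially"
    using eventually_bign[OF assms] by eventually_elim (rule prob_bound[OF _ assms])
  show "eventually (\<lambda>n. measure_pmf.prob (triangle_removal_process n) {gs. good_event n \<alpha> gs} \<le> 1) sequentially"
    by simp
  have L: "\<And>c::real. (\<lambda>n::nat. 1 - c / real n) \<longlonglongrightarrow> 1" by real_asymp
  have "(\<lambda>n::nat. 1 - 144 / (\<alpha>^2 * real n)) = (\<lambda>n. 1 - (144 / \<alpha>^2) / real n)"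
    by (simp add: divide_divide_eq_left)
  then show "(\<lambda>n. 1 - 144 / (\<alpha>^2 * real n)) \<longlonglongrightarrow> 1" using L[of "144 / \<alpha>^2"] by (simp only:)
  show "(\<lambda>n. 1::real) \<longlonglongrightarrow> 1" by simp
qed


end
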